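(* <ul> <li>If $n=3$: $\Gamma^1=\Gamma^2=\mathrm{Q}=\mathrm{P}=\mathrm{A}$.</li> <li>If $n=4$: $\Gamma^1=\Gamma^3=\mathrm{Q}$ and $\Gamma^2=\mathrm{Q}'=\mathrm{P}$, and $\mathrm{Q}\neq\mathrm{P}$.</li> <li>If $n=5$: $\Gamma^1=\Gamma^2=\Gamma^3=\Gamma^4=\mathrm{Q}$.</li> </ul>
   Context: Let $\mathrm{C}$ be either the real Clifford algebra $C\ell_{p,q}$ with $p+q=n$, or the complex Clifford algebra $C\ell(\mathbb{C}^n)$. It has identity $e$ and generators $e_1,\dots,e_n$ satisfying $e_ae_b+e_be_a=2\eta_{ab}e$. In the real case $\eta=\mathrm{diag}(1,\dots,1,-1,\dots,-1)$ with $p$ entries $+1$ and $q$ entries $-1$. In the complex case $\eta=I_n$. $\mathrm{C}^k$ is the grade-$k$ subspace, spanned by the products $e_{a_1}\cdots e_{a_k}$ with $a_1<\dots<a_k$. The even subspace is $\mathrm{C}^{(0)}=\bigoplus_{k\text{ even}}\mathrm{C}^k$ and the odd subspace is $\mathrm{C}^{(1)}=\bigoplus_{k\text{ odd}}\mathrm{C}^k$. The reversion $U\mapsto\tilde U$ is the linear anti-automorphism acting on $\mathrm{C}^k$ as $(-1)^{k(k-1)/2}$. For $S\subseteq\mathrm{C}$, $S^\times$ is the set of elements of $S$ invertible in $\mathrm{C}$, and $\mathrm{C}^{\times(j)}:=(\mathrm{C}^{(j)})^\times$. $\mathrm{Z}$ is the center: $\mathrm{Z}=\mathrm{C}^0$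 for $n$ even and $\mathrm{Z}=\mathrm{C}^0\oplus\mathrm{C}^n$ for $n$ odd. Define: <ul> <li>$\Gamma^k=\{T\in\mathrm{C}^\times: T\,\mathrm{C}^k\,T^{-1}\subseteq\mathrm{C}^k\}$;</li> <li>$\mathrm{P}:=\mathrm{Z}^\times(\mathrm{C}^{\times(0)}\cup\mathrm{C}^{\times(1)})=\{WT: W\in\mathrm{Z}^\times, T\in\mathrm{C}^{\times(0)}\cup\mathrm{C}^{\times(1)}\}$;</li> <li>$\mathrm{A}:=\{T\in\mathrm{C}^\times:\tilde TT\in\mathrm{Z}^\times\}$;</li> <li>$\mathrm{Q}:=\{T\in\mathrm{P}:\tilde TT\in\mathrm{Z}^\times\}$;</li> <li>$\mathrm{Q}':=\{T\in\mathrm{P}:\tilde TT\in(\mathrm{C}^0\oplus\mathrm{C}^n)^\times\}$.</li> </ul> *)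

theory Defs
  imports Complex_Main
begin

text \<open>Clifford algebra with generators e_0,...,e_(n-1) over a field 'a with diagonal
metric eta (e_a e_a = eta a).  Elements are coefficient functions on the basis
blades e_A (A a subset of {..<n}, e_A = ordered product of e_a, a in A, in increasing order).\<close>

type_synonym 'a mv = "nat set \<Rightarrow> 'a"

definition clif :: "nat \<Rightarrow> 'a::field mv set" where
  "clif n = {U. \<forall>A. \<not> A \<subseteq> {..<n} \<longrightarrow> U A = 0}"

definition blade_sign :: "nat set \<Rightarrow> nat set \<Rightarrow> 'a::field" where
  "blade_sign A B = (-1) ^ card {(a, b). a \<in> A \<and> b \<in> B \<and> b < a}"

definition cl_mult :: "nat \<Rightarrow> (nat \<Rightarrow> 'a::field) \<Rightarrow> 'a mv \<Rightarrow> 'a mv \<Rightarrow> 'a mv" where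
  "cl_mult n eta U V = (\<lambda>C. \<Sum>A\<in>Pow {..<n}. \<Sum>B\<in>Pow {..<n}.
      if (A - B) \<union> (B - A) = C
      then blade_sign A B * (\<Prod>i\<in>A \<inter> B. eta i) * U A * V B else 0)"

definition cl_one :: "'a::field mv" where
  "cl_one = (\<lambda>A. if A = {} then 1 else 0)"

definition cl_gen :: "nat \<Rightarrow> 'a::field mv" where
  "cl_gen a = (\<lambda>A. if A = {a} then 1 else 0)"

definition grades :: "nat \<Rightarrow> nat set \<Rightarrow> 'a::field mv set" where
  "grades n K = {U \<in> clif n. \<forall>A. card A \<notin> K \<longrightarrow> U A = 0}"

definition grade :: "nat \<Rightarrow> nat \<Rightarrow> 'a::field mv set" where
  "grade n k = grades n {k}"

definition even_part :: "nat \<Rightarrow> 'a::field mv set" where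
  "even_part n = grades n {k. even k}"

definition odd_part :: "nat \<Rightarrow> 'a::field mv set" where
  "odd_part n = grades n {k. odd k}"

definition cl_rev :: "'a::field mv \<Rightarrow> 'a mv" where
  "cl_rev U = (\<lambda>A. (-1) ^ (card A * (card A - 1) div 2) * U A)"

definition cl_invertible :: "nat \<Rightarrow> (nat \<Rightarrow> 'a::field) \<Rightarrow> 'a mv \<Rightarrow> bool" where
  "cl_invertible n eta T \<longleftrightarrow> T \<in> clif n \<and>
     (\<exists>V\<in>clif n. cl_mult n eta T V = cl_one \<and> cl_mult n eta V T = cl_one)"

definition cl_inv :: "nat \<Rightarrow> (nat \<Rightarrow> 'a::field) \<Rightarrow> 'a mv \<Rightarrow> 'a mv" where
  "cl_inv n eta T = (THE V. V \<in> clif n \<and> cl_mult n eta T V = cl_one \<and> cl_mult n eta V T = cl_one)"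

definition units_in :: "nat \<Rightarrow> (nat \<Rightarrow> 'a::field) \<Rightarrow> 'a mv set \<Rightarrow> 'a mv set" where
  "units_in n eta S = {T \<in> S. cl_invertible n eta T}"

definition center :: "nat \<Rightarrow> 'a::field mv set" where
  "center n = (if even n then grades n {0} else grades n {0, n})"

definition Gamma :: "nat \<Rightarrow> (nat \<Rightarrow> 'a::field) \<Rightarrow> nat \<Rightarrow> 'a mv set" where
  "Gamma n eta k = {T. cl_invertible n eta T \<and>
     (\<forall>X \<in> grade n k. cl_mult n eta (cl_mult n eta T X) (cl_inv n eta T) \<in> grade n k)}"

definition Pset :: "nat \<Rightarrow> (nat \<Rightarrow> 'a::field) \<Rightarrow> 'a mv set" where
  "Pset n eta = {cl_mult n eta W T | W T. W \<in> units_in n eta (center n) \<and>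
      T \<in> units_in n eta (even_part n) \<union> units_in n eta (odd_part n)}"

definition Aset :: "nat \<Rightarrow> (nat \<Rightarrow> 'a::field) \<Rightarrow> 'a mv set" where
  "Aset n eta = {T. cl_invertible n eta T \<and>
      cl_mult n eta (cl_rev T) T \<in> units_in n eta (center n)}"

definition Qset :: "nat \<Rightarrow> (nat \<Rightarrow> 'a::field) \<Rightarrow> 'a mv set" where
  "Qset n eta = {T \<in> Pset n eta. cl_mult n eta (cl_rev T) T \<in> units_in n eta (center n)}"

definition Qset' :: "nat \<Rightarrow> (nat \<Rightarrow> 'a::field) \<Rightarrow> 'a mv set" where
  "Qset' n eta = {T \<in> Pset n eta. cl_mult n eta (cl_rev T) T \<in> units_in n eta (grades n {0, n})}"

text \<open>Signature (p,q): eta i = 1 for i < p, -1 otherwise (generators indexed from 0).\<close>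
definition real_sig :: "nat \<Rightarrow> nat \<Rightarrow> real" where
  "real_sig p i = (if i < p then 1 else -1)"

definition low_dim_claims :: "nat \<Rightarrow> (nat \<Rightarrow> 'a::field) \<Rightarrow> bool" where
  "low_dim_claims n eta \<longleftrightarrow>
    (n = 3 \<longrightarrow> Gamma n eta 1 = Gamma n eta 2 \<and> Gamma n eta 2 = Qset n eta
               \<and> Qset n eta = Pset n eta \<and> Pset n eta = Aset n eta) \<and>
    (n = 4 \<longrightarrow> Gamma n eta 1 = Gamma n eta 3 \<and> Gamma n eta 3 = Qset n eta
               \<and> Gamma n eta 2 = Qset' n eta \<and> Qset' n eta = Pset n eta
               \<and> Qset n eta \<noteq> Pset n eta) \<and>
    (n = 5 \<longrightarrow> Gamma n eta 1 = Gamma n eta 2 \<and> Gamma n eta 2 = Gamma n eta 3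
               \<and> Gamma n eta 3 = Gamma n eta 4 \<and> Gamma n eta 4 = Qset n eta)"

end

theory Submission
  imports Defs "HOL-Library.Function_Algebras"
begin

definition sdf :: "nat set \<Rightarrow> nat set \<Rightarrow> nat set" where
  "sdf A B = (A - B) \<union> (B - A)"

lemma sdf_eq_iff: "sdf A B = C \<longleftrightarrow> B = sdf A C"
  unfolding sdf_def by blast
lemma sdf_comm: "sdf A B = sdf B A" unfolding sdf_def by blast
lemma sdf_cancel [simp]: "sdf A (sdf A C) = C" unfolding sdf_def by blast
lemma sdf_cancel2 [simp]: "sdf (sdf A C) A = C" unfolding sdf_def by blast
lemma sdf_cancel3 [simp]: "sdf (sdf C A) A = C" unfolding sdf_def by blast
lemma sdf_self [simp]: "sdf A A = {}" unfolding sdf_def by blast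
lemma sdf_empty [simp]: "sdf A {} = A" "sdf {} A = A" unfolding sdf_def by blast+
lemma sdf_assoc: "sdf (sdf A B) C = sdf A (sdf B C)" unfolding sdf_def by blast
lemma sdf_sub: "A \<subseteq> S \<Longrightarrow> B \<subseteq> S \<Longrightarrow> sdf A B \<subseteq> S" unfolding sdf_def by blast
lemma sdf_empty_iff: "sdf A B = {} \<longleftrightarrow> A = B" unfolding sdf_def by blast

lemma card_sdf_add:
  assumes "finite X" "finite Y"
  shows "card ((X - Y) \<union> (Y - X)) + 2 * card (X \<inter> Y) = card X + card Y"
proof -
  have a: "card ((X - Y) \<union> (Y - X)) = card (X - Y) + card (Y - X)"
    using assms by (intro card_Un_disjoint) auto
  have b: "card X = card (X - Y) + card (X \<inter> Y)"
    using card_Int_Diff[of X Y] assms by simp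
  have c: "card Y = card (Y - X) + card (X \<inter> Y)"
    using card_Int_Diff[of Y X] assms by (simp add: Int_commute)
  show ?thesis using a b c by simp
qed

lemma neg1_pow_sdf:
  assumes "finite X" "finite Y"
  shows "((-1::'a::comm_ring_1) ^ card ((X - Y) \<union> (Y - X))) = (-1) ^ card X * (-1) ^ card Y"
proof -
  have "(-1::'a) ^ card X * (-1) ^ card Y = (-1) ^ (card X + card Y)" by (simp add: power_add)
  also have "\<dots> = (-1) ^ (card ((X - Y) \<union> (Y - X)) + 2 * card (X \<inter> Y))"
    using card_sdf_add[OF assms] by simp
  also have "\<dots> = (-1) ^ card ((X - Y) \<union> (Y - X))" by (simp add: power_add power_mult)
  finally show ?thesis by simp
qed

lemma neg1_pow_sdf':
  assumes "finite X" "finite Y"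
  shows "((-1::'a::comm_ring_1) ^ card (sdf X Y)) = (-1) ^ card X * (-1) ^ card Y"
  using neg1_pow_sdf[OF assms] unfolding sdf_def by simp

definition binv :: "nat set \<Rightarrow> nat set \<Rightarrow> nat" where
  "binv A B = card {(a, b). a \<in> A \<and> b \<in> B \<and> b < a}"

lemma blade_sign_binv: "blade_sign A B = (-1) ^ binv A B"
  unfolding blade_sign_def binv_def by simp

lemma binv_sdf_left:
  assumes "finite A" "finite B" "finite C"
  shows "(-1::'a::comm_ring_1) ^ binv (sdf A B) C = (-1) ^ binv A C * (-1) ^ binv B C"
proof -
  let ?SA = "{(a, c). a \<in> A \<and> c \<in> C \<and> c < a}"
  let ?SB = "{(a, c). a \<in> B \<and> c \<in> C \<and> c < a}"
  have e: "{(a, c). a \<in> sdf A B \<and> c \<in> C \<and> c < a} = (?SA - ?SB) \<union> (?SB - ?SA)"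
    unfolding sdf_def by auto
  have fa: "finite ?SA" by (rule finite_subset[of _ "A \<times> C"]) (use assms in auto)
  have fb: "finite ?SB" by (rule finite_subset[of _ "B \<times> C"]) (use assms in auto)
  show ?thesis unfolding binv_def e using neg1_pow_sdf[OF fa fb] by simp
qed

lemma binv_sdf_right:
  assumes "finite A" "finite B" "finite C"
  shows "(-1::'a::comm_ring_1) ^ binv A (sdf B C) = (-1) ^ binv A B * (-1) ^ binv A C"
proof -
  let ?SA = "{(a, c). a \<in> A \<and> c \<in> B \<and> c < a}"
  let ?SB = "{(a, c). a \<in> A \<and> c \<in> C \<and> c < a}"
  have e: "{(a, c). a \<in> A \<and> c \<in> sdf B C \<and> c < a} = (?SA - ?SB) \<union> (?SB - ?SA)"
    unfolding sdf_def by auto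
  have fa: "finite ?SA" by (rule finite_subset[of _ "A \<times> B"]) (use assms in auto)
  have fb: "finite ?SB" by (rule finite_subset[of _ "A \<times> C"]) (use assms in auto)
  show ?thesis unfolding binv_def e using neg1_pow_sdf[OF fa fb] by simp
qed

lemma binv_count:
  assumes "finite A" "finite B"
  shows "binv A B + binv B A + card (A \<inter> B) = card A * card B"
proof -
  let ?X1 = "{(a, b). a \<in> A \<and> b \<in> B \<and> b < a}"
  let ?X2 = "{(a, b). a \<in> A \<and> b \<in> B \<and> a < b}"
  let ?X3 = "{(a, b). a \<in> A \<and> b \<in> B \<and> a = b}"
  have fin: "finite (A \<times> B)" using assms by simp
  have f1: "finite ?X1" by (rule finite_subset[OF _ fin]) auto
  have f2: "finite ?X2" by (rule finite_subset[OF _ fin]) auto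
  have f3: "finite ?X3" by (rule finite_subset[OF _ fin]) auto
  have u: "A \<times> B = (?X1 \<union> ?X2) \<union> ?X3" by auto
  have "card (A \<times> B) = card (?X1 \<union> ?X2) + card ?X3"
    unfolding u by (rule card_Un_disjoint) (use f1 f2 f3 in auto)
  also have "card (?X1 \<union> ?X2) = card ?X1 + card ?X2"
    by (rule card_Un_disjoint) (use f1 f2 in auto)
  also have "card ?X2 = binv B A"
  proof -
    have "?X2 = (\<lambda>(x, y). (y, x)) ` {(b, a). b \<in> B \<and> a \<in> A \<and> a < b}" by auto
    moreover have "inj_on (\<lambda>(x, y). (y, x)) {(b, a). b \<in> B \<and> a \<in> A \<and> a < b}"
      by (auto simp: inj_on_def)
    ultimately show ?thesis unfolding binv_def by (simp add: card_image)
  qed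
  also have "card ?X3 = card (A \<inter> B)"
  proof -
    have "?X3 = (\<lambda>x. (x, x)) ` (A \<inter> B)" by auto
    moreover have "inj_on (\<lambda>x. (x, x)) (A \<inter> B)" by (auto simp: inj_on_def)
    ultimately show ?thesis by (simp add: card_image)
  qed
  also have "card ?X1 = binv A B" unfolding binv_def ..
  finally have "card (A \<times> B) = binv A B + binv B A + card (A \<inter> B)" .
  then show ?thesis unfolding card_cartesian_product by (rule sym)
qed

definition mm :: "(nat \<Rightarrow> 'a::field) \<Rightarrow> nat set \<Rightarrow> nat set \<Rightarrow> 'a" where
  "mm eta A B = blade_sign A B * (\<Prod>i\<in>A \<inter> B. eta i)"

lemma mult_alt:
  "cl_mult n eta U V C = (if C \<subseteq> {..<n} then
      (\<Sum>A\<in>Pow {..<n}. mm eta A (sdf A C) * U A * V (sdf A C)) else 0)"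
proof -
  have inner: "(\<Sum>B\<in>Pow {..<n}. if (A - B) \<union> (B - A) = C
      then blade_sign A B * (\<Prod>i\<in>A \<inter> B. eta i) * U A * V B else 0)
     = (if sdf A C \<in> Pow {..<n} then mm eta A (sdf A C) * U A * V (sdf A C) else 0)" for A
  proof -
    have "(\<Sum>B\<in>Pow {..<n}. if (A - B) \<union> (B - A) = C
      then blade_sign A B * (\<Prod>i\<in>A \<inter> B. eta i) * U A * V B else 0)
      = (\<Sum>B\<in>Pow {..<n}. if B = sdf A C then mm eta A B * U A * V B else 0)"
    proof (rule sum.cong[OF refl])
      fix B
      have h: "((A - B) \<union> (B - A) = C) = (B = sdf A C)"
        using sdf_eq_iff[of A B C] unfolding sdf_def by simp
      show "(if (A - B) \<union> (B - A) = C
      then blade_sign A B * (\<Prod>i\<in>A \<inter> B. eta i) * U A * V B else 0) =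
       (if B = sdf A C then mm eta A B * U A * V B else 0)"
        by (simp only: h mm_def)
    qed
    also have "\<dots> = (if sdf A C \<in> Pow {..<n} then mm eta A (sdf A C) * U A * V (sdf A C) else 0)"
      by (subst sum.delta) auto
    finally show ?thesis .
  qed
  show ?thesis
  proof (cases "C \<subseteq> {..<n}")
    case True
    have m: "sdf A C \<subseteq> {..<n}" if "A \<subseteq> {..<n}" for A
      using sdf_sub[of A "{..<n}" C] that True by simp
    have "cl_mult n eta U V C = (\<Sum>A\<in>Pow {..<n}. if sdf A C \<in> Pow {..<n} then mm eta A (sdf A C) * U A * V (sdf A C) else 0)"
      unfolding cl_mult_def inner by (rule refl)
    also have "\<dots> = (\<Sum>A\<in>Pow {..<n}. mm eta A (sdf A C) * U A * V (sdf A C))"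
      by (rule sum.cong[OF refl]) (simp add: m)
    finally show ?thesis using True by (simp only: if_True)
  next
    case False
    have nP: "sdf A C \<notin> Pow {..<n}" if "A \<in> Pow {..<n}" for A
    proof
      assume a: "sdf A C \<in> Pow {..<n}"
      have "sdf A (sdf A C) \<subseteq> {..<n}" using sdf_sub[of A "{..<n}" "sdf A C"] that a by auto
      then show False using False by simp
    qed
    have "cl_mult n eta U V C = (\<Sum>A\<in>Pow {..<n}. 0)"
      unfolding cl_mult_def inner by (rule sum.cong[OF refl]) (simp only: nP if_False)
    then show ?thesis using False by (simp only: sum.neutral_const if_False)
  qed
qed



lemma sum_sdf_reindex:
  assumes "A \<subseteq> S"
  shows "(\<Sum>C\<in>Pow S. f C) = (\<Sum>B\<in>Pow S. f (sdf A B))"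
  by (rule sum.reindex_bij_witness[where i="sdf A" and j="sdf A"])
     (use assms in \<open>simp_all add: sdf_sub\<close>)

lemma cocycle:
  assumes "finite A" "finite B" "finite C"
  shows "mm eta A B * mm eta (sdf A B) C = mm eta B C * mm eta A (sdf B C)"
proof -
  have s1: "blade_sign (sdf A B) C = (blade_sign A C * blade_sign B C :: 'a)"
    using binv_sdf_left[OF assms] by (simp add: blade_sign_binv)
  have s2: "blade_sign A (sdf B C) = (blade_sign A B * blade_sign A C :: 'a)"
    using binv_sdf_right[OF assms] by (simp add: blade_sign_binv)
  let ?M = "(A \<inter> B) \<union> (sdf A B \<inter> C)"
  have p1: "(\<Prod>i\<in>A \<inter> B. eta i) * (\<Prod>i\<in>sdf A B \<inter> C. eta i) = (\<Prod>i\<in>?M. eta i)"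
  proof -
    have d1: "(A \<inter> B) \<inter> (sdf A B \<inter> C) = {}" unfolding sdf_def by blast
    show ?thesis by (rule prod.union_disjoint[symmetric, OF _ _ d1]) (use assms in auto)
  qed
  have e: "?M = (B \<inter> C) \<union> (A \<inter> sdf B C)" unfolding sdf_def by blast
  have p2: "(\<Prod>i\<in>B \<inter> C. eta i) * (\<Prod>i\<in>A \<inter> sdf B C. eta i) = (\<Prod>i\<in>?M. eta i)"
  proof -
    have d1: "(B \<inter> C) \<inter> (A \<inter> sdf B C) = {}" unfolding sdf_def by blast
    show ?thesis unfolding e by (rule prod.union_disjoint[symmetric, OF _ _ d1]) (use assms in auto)
  qed
  have "mm eta A B * mm eta (sdf A B) C = (blade_sign A B * blade_sign A C * blade_sign B C)
          * ((\<Prod>i\<in>A \<inter> B. eta i) * (\<Prod>i\<in>sdf A B \<inter> C. eta i))"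
    unfolding mm_def s1 by (simp add: ac_simps)
  also have "\<dots> = (blade_sign A B * blade_sign A C * blade_sign B C)
          * ((\<Prod>i\<in>B \<inter> C. eta i) * (\<Prod>i\<in>A \<inter> sdf B C. eta i))"
    using p1 p2 by simp
  also have "\<dots> = mm eta B C * mm eta A (sdf B C)"
    unfolding mm_def s2 by (simp add: ac_simps)
  finally show ?thesis .
qed

lemma mult_assoc:
  "cl_mult n eta (cl_mult n eta U V) W = cl_mult n eta U (cl_mult n eta V W)"
proof (rule ext)
  fix D
  show "cl_mult n eta (cl_mult n eta U V) W D = cl_mult n eta U (cl_mult n eta V W) D"
  proof (cases "D \<subseteq> {..<n}")
    case False
    then show ?thesis by (simp add: mult_alt)
  next
    case True
    let ?P = "Pow {..<n}"
    have fin: "X \<in> ?P \<Longrightarrow> finite X" for X by (auto intro: finite_subset)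
    have "cl_mult n eta (cl_mult n eta U V) W D
        = (\<Sum>C\<in>?P. mm eta C (sdf C D) * (\<Sum>A\<in>?P. mm eta A (sdf A C) * U A * V (sdf A C)) * W (sdf C D))"
      using True by (simp add: mult_alt)
    also have "\<dots> = (\<Sum>C\<in>?P. \<Sum>A\<in>?P. mm eta C (sdf C D) * mm eta A (sdf A C) * U A * V (sdf A C) * W (sdf C D))"
      by (simp add: sum_distrib_left sum_distrib_right ac_simps)
    also have "\<dots> = (\<Sum>A\<in>?P. \<Sum>C\<in>?P. mm eta C (sdf C D) * mm eta A (sdf A C) * U A * V (sdf A C) * W (sdf C D))"
      by (rule sum.swap)
    also have "\<dots> = (\<Sum>A\<in>?P. \<Sum>B\<in>?P. mm eta (sdf A B) (sdf (sdf A B) D) * mm eta A B * U A * V B * W (sdf (sdf A B) D))"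
    proof (rule sum.cong[OF refl])
      fix A assume "A \<in> ?P"
      then show "(\<Sum>C\<in>?P. mm eta C (sdf C D) * mm eta A (sdf A C) * U A * V (sdf A C) * W (sdf C D))
         = (\<Sum>B\<in>?P. mm eta (sdf A B) (sdf (sdf A B) D) * mm eta A B * U A * V B * W (sdf (sdf A B) D))"
        using sum_sdf_reindex[of A "{..<n}" "\<lambda>C. mm eta C (sdf C D) * mm eta A (sdf A C) * U A * V (sdf A C) * W (sdf C D)"] by simp
    qed
    also have "\<dots> = (\<Sum>A\<in>?P. \<Sum>B\<in>?P. mm eta A (sdf A D) * U A * (mm eta B (sdf B (sdf A D)) * V B * W (sdf B (sdf A D))))"
    proof (intro sum.cong refl)
      fix A B assume A: "A \<in> ?P" and B: "B \<in> ?P"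
      let ?C = "sdf (sdf A B) D"
      have "?C \<subseteq> {..<n}" using A B True by (simp add: sdf_sub)
      then have fC: "finite ?C" by (rule finite_subset) simp
      have c: "mm eta A B * mm eta (sdf A B) ?C = mm eta B ?C * mm eta A (sdf B ?C)"
        using cocycle[OF fin[OF A] fin[OF B] fC] .
      have e1: "sdf B ?C = sdf A D" unfolding sdf_def by blast
      have e2: "sdf B (sdf A D) = ?C" unfolding sdf_def by blast
      show "mm eta (sdf A B) ?C * mm eta A B * U A * V B * W ?C
          = mm eta A (sdf A D) * U A * (mm eta B (sdf B (sdf A D)) * V B * W (sdf B (sdf A D)))"
        using c unfolding e1 e2 by (simp add: ac_simps)
    qed
    also have "\<dots> = (\<Sum>A\<in>?P. mm eta A (sdf A D) * U A * (\<Sum>B\<in>?P. mm eta B (sdf B (sdf A D)) * V B * W (sdf B (sdf A D))))"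
      by (simp add: sum_distrib_left)
    also have "\<dots> = cl_mult n eta U (cl_mult n eta V W) D"
    proof -
      have h: "A \<subseteq> {..<n} \<Longrightarrow> sdf A D \<subseteq> {..<n}" for A using True by (simp add: sdf_sub)
      have "cl_mult n eta U (cl_mult n eta V W) D = (\<Sum>A\<in>?P. mm eta A (sdf A D) * U A * cl_mult n eta V W (sdf A D))"
        using True by (simp only: mult_alt[of n eta U] if_True)
      also have "\<dots> = (\<Sum>A\<in>?P. mm eta A (sdf A D) * U A * (\<Sum>B\<in>?P. mm eta B (sdf B (sdf A D)) * V B * W (sdf B (sdf A D))))"
        by (rule sum.cong[OF refl]) (simp add: mult_alt[of n eta V W] h)
      finally show ?thesis by (rule sym)
    qed
    finally show ?thesis .
  qed
qed



definition blade :: "nat set \<Rightarrow> 'a::field mv" where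
  "blade A = (\<lambda>C. if C = A then 1 else 0)"

definition sc :: "'a::field \<Rightarrow> 'a mv \<Rightarrow> 'a mv" where
  "sc a U = (\<lambda>A. a * U A)"

definition hat :: "'a::field mv \<Rightarrow> 'a mv" where
  "hat U = (\<lambda>A. (-1) ^ card A * U A)"

definition rs :: "nat \<Rightarrow> 'a::field" where
  "rs k = (-1) ^ (k * (k - 1) div 2)"

lemma cl_one_blade: "cl_one = blade {}"
  unfolding cl_one_def blade_def by auto

lemma binv_self: assumes "finite X" shows "binv X X = card X * (card X - 1) div 2"
proof -
  have h: "2 * binv X X + card X = card X * card X" using binv_count[OF assms assms] by simp
  have "card X * (card X - 1) = card X * card X - card X" by (simp add: diff_mult_distrib2)
  also have "\<dots> = 2 * binv X X" using h by linarith
  finally show ?thesis by simp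
qed

lemma bs_self: "finite X \<Longrightarrow> blade_sign X X = rs (card X)"
  unfolding blade_sign_binv rs_def by (simp add: binv_self)

lemma bs_sq: "blade_sign A B * blade_sign A B = (1::'a::field)"
  unfolding blade_sign_binv by (simp add: power_mult_distrib[symmetric] power_mult[symmetric] mult_2[symmetric]
     flip: power_add)

lemma bs_nz: "blade_sign A B \<noteq> (0::'a::field)"
  unfolding blade_sign_binv by simp

locale cliff =
  fixes n :: nat and eta :: "nat \<Rightarrow> 'a::field_char_0"
  assumes eta_pm: "eta i = 1 \<or> eta i = -1"
begin

abbreviation mul :: "'a mv \<Rightarrow> 'a mv \<Rightarrow> 'a mv" (infixl "\<odot>" 70) where
  "U \<odot> V \<equiv> cl_mult n eta U V"

abbreviation "PP \<equiv> Pow {..<n}"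

lemma eta_sq: "eta i * eta i = 1"
  using eta_pm[of i] by auto

lemma prod_eta_sq: "(\<Prod>i\<in>S. eta i) * (\<Prod>i\<in>S. eta i) = 1"
  by (simp add: prod.distrib[symmetric] eta_sq)

lemma prod_eta_nz: "(\<Prod>i\<in>S. eta i) \<noteq> 0"
  using prod_eta_sq[of S] by auto

lemma mm_nz: "mm eta A B \<noteq> 0"
  unfolding mm_def using prod_eta_nz bs_nz by simp

lemma mm_empty [simp]: "mm eta {} B = 1" "mm eta B {} = 1"
  unfolding mm_def blade_sign_binv binv_def by simp_all

lemma mult_clif: "U \<odot> V \<in> clif n"
  unfolding clif_def by (simp add: mult_alt)

lemma clif_out: "U \<in> clif n \<Longrightarrow> \<not> A \<subseteq> {..<n} \<Longrightarrow> U A = 0"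
  unfolding clif_def by auto

lemma clif_eqI:
  assumes "U \<in> clif n" "V \<in> clif n" "\<And>A. A \<subseteq> {..<n} \<Longrightarrow> U A = V A"
  shows "U = V"
proof
  fix A show "U A = V A" using assms clif_out[of U A] clif_out[of V A] by (cases "A \<subseteq> {..<n}") auto
qed

lemma mult_blade_right:
  assumes "B \<subseteq> {..<n}"
  shows "(U \<odot> blade B) C = (if C \<subseteq> {..<n} then mm eta (sdf B C) B * U (sdf B C) else 0)"
proof (cases "C \<subseteq> {..<n}")
  case True
  have "(U \<odot> blade B) C = (\<Sum>A\<in>PP. mm eta A (sdf A C) * U A * blade B (sdf A C))"
    using True by (simp add: mult_alt)
  also have "\<dots> = (\<Sum>A\<in>PP. if A = sdf B C then mm eta A (sdf A C) * U A else 0)"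
  proof (rule sum.cong[OF refl])
    fix A
    have "(sdf A C = B) = (A = sdf B C)" unfolding sdf_def by blast
    then show "mm eta A (sdf A C) * U A * blade B (sdf A C) = (if A = sdf B C then mm eta A (sdf A C) * U A else 0)"
      unfolding blade_def by simp
  qed
  also have "\<dots> = mm eta (sdf B C) B * U (sdf B C)"
    using True assms by (subst sum.delta) (simp_all add: sdf_sub)
  finally show ?thesis using True by simp
qed (simp add: mult_alt)

lemma mult_blade_left:
  assumes "B \<subseteq> {..<n}"
  shows "(blade B \<odot> U) C = (if C \<subseteq> {..<n} then mm eta B (sdf B C) * U (sdf B C) else 0)"
proof (cases "C \<subseteq> {..<n}")
  case True
  have "(blade B \<odot> U) C = (\<Sum>A\<in>PP. mm eta A (sdf A C) * blade B A * U (sdf A C))"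
    using True by (simp add: mult_alt)
  also have "\<dots> = (\<Sum>A\<in>PP. if A = B then mm eta A (sdf A C) * U (sdf A C) else 0)"
    by (rule sum.cong[OF refl]) (simp add: blade_def)
  also have "\<dots> = mm eta B (sdf B C) * U (sdf B C)"
    using assms by (subst sum.delta) simp_all
  finally show ?thesis using True by simp
qed (simp add: mult_alt)

lemma one_clif: "cl_one \<in> clif n"
  unfolding clif_def cl_one_def by auto

lemma mult_one_left: "U \<in> clif n \<Longrightarrow> cl_one \<odot> U = U"
  unfolding cl_one_blade
  by (rule clif_eqI) (simp_all add: mult_clif mult_blade_left)

lemma mult_one_right: "U \<in> clif n \<Longrightarrow> U \<odot> cl_one = U"
  unfolding cl_one_blade
  by (rule clif_eqI) (simp_all add: mult_clif mult_blade_right)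

lemma mult_assoc': "(U \<odot> V) \<odot> W = U \<odot> (V \<odot> W)"
  by (rule mult_assoc)

lemma add_clif: "U \<in> clif n \<Longrightarrow> V \<in> clif n \<Longrightarrow> U + V \<in> clif n"
  unfolding clif_def by auto
lemma sc_clif: "U \<in> clif n \<Longrightarrow> sc a U \<in> clif n"
  unfolding clif_def sc_def by auto
lemma zero_clif: "0 \<in> clif n"
  unfolding clif_def by auto
lemma hat_clif: "U \<in> clif n \<Longrightarrow> hat U \<in> clif n"
  unfolding clif_def hat_def by auto
lemma rev_clif: "U \<in> clif n \<Longrightarrow> cl_rev U \<in> clif n"
  unfolding clif_def cl_rev_def by auto
lemma blade_clif: "B \<subseteq> {..<n} \<Longrightarrow> blade B \<in> clif n"
  unfolding clif_def blade_def by auto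
lemma diff_clif: "U \<in> clif n \<Longrightarrow> V \<in> clif n \<Longrightarrow> U - V \<in> clif n"
  unfolding clif_def by auto

lemma mult_add_left: "(U + V) \<odot> W = U \<odot> W + V \<odot> W"
  by (rule ext) (simp add: mult_alt sum.distrib[symmetric] algebra_simps)
lemma mult_add_right: "W \<odot> (U + V) = W \<odot> U + W \<odot> V"
  by (rule ext) (simp add: mult_alt sum.distrib[symmetric] algebra_simps)
lemma mult_diff_left: "(U - V) \<odot> W = U \<odot> W - V \<odot> W"
proof -
  have "(U - V) \<odot> W + V \<odot> W = U \<odot> W" using mult_add_left[of "U - V" V W] by simp
  then show ?thesis by (simp add: eq_diff_eq)
qed
lemma mult_diff_right: "W \<odot> (U - V) = W \<odot> U - W \<odot> V"
proof -
  have "W \<odot> (U - V) + W \<odot> V = W \<odot> U" using mult_add_right[of W "U - V" V] by simp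
  then show ?thesis by (simp add: eq_diff_eq)
qed
lemma mult_sc_left: "sc a U \<odot> W = sc a (U \<odot> W)"
  by (rule ext) (simp add: mult_alt sc_def sum_distrib_left algebra_simps)
lemma mult_sc_right: "W \<odot> sc a U = sc a (W \<odot> U)"
  by (rule ext) (simp add: mult_alt sc_def sum_distrib_left algebra_simps)
lemma mult_zero_left [simp]: "0 \<odot> W = 0"
  by (rule ext) (simp add: mult_alt)
lemma mult_zero_right [simp]: "W \<odot> 0 = 0"
  by (rule ext) (simp add: mult_alt)

lemma scalar_part: "(U \<odot> V) {} = (\<Sum>A\<in>PP. mm eta A A * U A * V A)"
  by (simp add: mult_alt)

lemma scalar_cyclic: "(U \<odot> V) {} = (V \<odot> U) {}"
  unfolding scalar_part by (simp add: ac_simps)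

lemma neg1_card_sdf_mult:
  assumes "A \<subseteq> {..<n}" "C \<subseteq> {..<n}"
  shows "(-1::'a) ^ card A * (-1) ^ card (sdf A C) = (-1) ^ card C"
proof -
  have f: "finite A" "finite C" using assms finite_subset by auto
  have "(-1::'a) ^ card (sdf A C) = (-1) ^ card A * (-1) ^ card C" by (rule neg1_pow_sdf'[OF f])
  then have "(-1::'a) ^ card A * (-1) ^ card (sdf A C) = ((-1) ^ card A * (-1) ^ card A) * (-1) ^ card C"
    by (simp add: ac_simps)
  also have "(-1::'a) ^ card A * (-1) ^ card A = 1" by (simp flip: power_add add: mult_2[symmetric] power_mult)
  finally show ?thesis by simp
qed

lemma hat_mult: "hat (U \<odot> V) = hat U \<odot> hat V"
proof (rule ext)
  fix C show "hat (U \<odot> V) C = (hat U \<odot> hat V) C"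
  proof (cases "C \<subseteq> {..<n}")
    case True
    have "hat (U \<odot> V) C = (\<Sum>A\<in>PP. (-1) ^ card C * (mm eta A (sdf A C) * U A * V (sdf A C)))"
      using True by (simp add: hat_def mult_alt sum_distrib_left)
    also have "\<dots> = (\<Sum>A\<in>PP. mm eta A (sdf A C) * ((-1) ^ card A * U A) * ((-1) ^ card (sdf A C) * V (sdf A C)))"
    proof (rule sum.cong[OF refl])
      fix A assume "A \<in> PP"
      then have "(-1::'a) ^ card A * (-1) ^ card (sdf A C) = (-1) ^ card C"
        using True by (intro neg1_card_sdf_mult) auto
      then show "(-1) ^ card C * (mm eta A (sdf A C) * U A * V (sdf A C)) =
          mm eta A (sdf A C) * ((-1) ^ card A * U A) * ((-1) ^ card (sdf A C) * V (sdf A C))"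
        by (metis (no_types, lifting) mult.assoc mult.left_commute)
    qed
    also have "\<dots> = (hat U \<odot> hat V) C" using True by (simp add: hat_def mult_alt)
    finally show ?thesis .
  qed (simp add: hat_def mult_alt)
qed

lemma rev_mm:
  assumes "finite A" "finite B"
  shows "rs (card (sdf A B)) * mm eta A B = mm eta B A * rs (card A) * rs (card B)"
proof -
  have fs: "finite (sdf A B)" using assms unfolding sdf_def by auto
  have e1: "blade_sign (sdf A B) (sdf A B) = (blade_sign A A * blade_sign A B) * (blade_sign B A * blade_sign B B :: 'a)"
  proof -
    note a = binv_sdf_left[OF assms fs, where 'a='a]
    note b = binv_sdf_right[OF assms(1) assms, where 'a='a]
    note c = binv_sdf_right[OF assms(2) assms, where 'a='a]
    show ?thesis unfolding blade_sign_binv a b c by (rule refl)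
  qed
  have "rs (card (sdf A B)) * mm eta A B = blade_sign (sdf A B) (sdf A B) * mm eta A B"
    using bs_self[OF fs, where 'a='a] by simp
  also have "\<dots> = blade_sign A A * blade_sign B B * blade_sign B A * (blade_sign A B * blade_sign A B)
      * (\<Prod>i\<in>A \<inter> B. eta i)"
    unfolding e1 mm_def by (simp add: ac_simps)
  also have "\<dots> = mm eta B A * rs (card A) * rs (card B)"
    using bs_self[OF assms(1), where 'a='a] bs_self[OF assms(2), where 'a='a] unfolding bs_sq[where 'a='a] mm_def by (simp add: ac_simps Int_commute)
  finally show ?thesis .
qed

lemma rev_mult: "cl_rev (U \<odot> V) = cl_rev V \<odot> cl_rev U"
proof (rule ext)
  fix C show "cl_rev (U \<odot> V) C = (cl_rev V \<odot> cl_rev U) C"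
  proof (cases "C \<subseteq> {..<n}")
    case True
    have rr: "cl_rev W X = rs (card X) * W X" for W X unfolding cl_rev_def rs_def by simp
    have "(cl_rev V \<odot> cl_rev U) C = (\<Sum>B\<in>PP. mm eta B (sdf B C) * (rs (card B) * V B) * (rs (card (sdf B C)) * U (sdf B C)))"
      using True by (simp add: mult_alt rr)
    also have "\<dots> = (\<Sum>A\<in>PP. mm eta (sdf C A) (sdf (sdf C A) C) * (rs (card (sdf C A)) * V (sdf C A)) * (rs (card (sdf (sdf C A) C)) * U (sdf (sdf C A) C)))"
      using sum_sdf_reindex[OF True, of "\<lambda>B. mm eta B (sdf B C) * (rs (card B) * V B) * (rs (card (sdf B C)) * U (sdf B C))"] .
    also have "\<dots> = (\<Sum>A\<in>PP. rs (card C) * (mm eta A (sdf A C) * U A * V (sdf A C)))"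
    proof (rule sum.cong[OF refl])
      fix A assume A: "A \<in> PP"
      have fA: "finite A" using A finite_subset by auto
      have fB: "finite (sdf A C)" using A True finite_subset[OF sdf_sub[of A "{..<n}" C]] by auto
      have e: "sdf C A = sdf A C" by (rule sdf_comm)
      have e2: "sdf A (sdf A C) = C" by simp
      have "rs (card (sdf A (sdf A C))) * mm eta A (sdf A C) = mm eta (sdf A C) A * rs (card A) * rs (card (sdf A C))"
        by (rule rev_mm[OF fA fB])
      then show "mm eta (sdf C A) (sdf (sdf C A) C) * (rs (card (sdf C A)) * V (sdf C A)) * (rs (card (sdf (sdf C A) C)) * U (sdf (sdf C A) C))
          = rs (card C) * (mm eta A (sdf A C) * U A * V (sdf A C))"
        unfolding e e2 by (simp add: ac_simps)
    qed
    also have "\<dots> = cl_rev (U \<odot> V) C" using True by (simp add: mult_alt rr sum_distrib_left)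
    finally show ?thesis by simp
  qed (simp add: cl_rev_def mult_alt)
qed

lemma rs_sq: "rs k * rs k = (1::'a)"
  unfolding rs_def by (simp flip: power_add add: mult_2[symmetric] power_mult)

lemma rev_rev: "cl_rev (cl_rev U) = U"
  unfolding cl_rev_def by (rule ext) (simp flip: power_add add: mult_2[symmetric] power_mult mult.assoc[symmetric])

lemma hat_hat: "hat (hat U) = U"
  unfolding hat_def by (rule ext) (simp flip: power_add add: mult_2[symmetric] power_mult mult.assoc[symmetric])

lemma rev_one: "cl_rev cl_one = cl_one"
  unfolding cl_rev_def cl_one_def by auto
lemma hat_one: "hat cl_one = cl_one"
  unfolding hat_def cl_one_def by auto

lemma rev_add: "cl_rev (U + V) = cl_rev U + cl_rev V"
  unfolding cl_rev_def by (rule ext) (simp add: algebra_simps)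
lemma rev_sc: "cl_rev (sc a U) = sc a (cl_rev U)"
  unfolding cl_rev_def sc_def by (rule ext) (simp add: algebra_simps)
lemma hat_add: "hat (U + V) = hat U + hat V"
  unfolding hat_def by (rule ext) (simp add: algebra_simps)
lemma hat_sc: "hat (sc a U) = sc a (hat U)"
  unfolding hat_def sc_def by (rule ext) (simp add: algebra_simps)
lemma hat_rev: "hat (cl_rev U) = cl_rev (hat U)"
  unfolding hat_def cl_rev_def by (rule ext) (simp add: algebra_simps)

end



context cliff
begin

lemma inv_unique_aux:
  assumes "V \<in> clif n" "V' \<in> clif n" "V \<odot> T = cl_one" "T \<odot> V' = cl_one"
  shows "V = V'"
proof -
  have "V = V \<odot> (T \<odot> V')" using assms by (simp add: mult_one_right)
  also have "\<dots> = (V \<odot> T) \<odot> V'" by (simp add: mult_assoc)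
  also have "\<dots> = V'" using assms by (simp add: mult_one_left)
  finally show ?thesis .
qed

lemma inv_spec:
  assumes "cl_invertible n eta T"
  shows "cl_inv n eta T \<in> clif n" "T \<odot> cl_inv n eta T = cl_one" "cl_inv n eta T \<odot> T = cl_one"
proof -
  obtain V where V: "V \<in> clif n" "T \<odot> V = cl_one" "V \<odot> T = cl_one"
    using assms unfolding cl_invertible_def by blast
  have "cl_inv n eta T = V"
    unfolding cl_inv_def
  proof (rule the_equality)
    show "V \<in> clif n \<and> T \<odot> V = cl_one \<and> V \<odot> T = cl_one" using V by simp
    fix W assume "W \<in> clif n \<and> T \<odot> W = cl_one \<and> W \<odot> T = cl_one"
    then show "W = V" using inv_unique_aux[of W V T] V by simp
  qed
  then show "cl_inv n eta T \<in> clif n" "T \<odot> cl_inv n eta T = cl_one" "cl_inv n eta T \<odot> T = cl_one"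
    using V by simp_all
qed

lemma inv_clif: "cl_invertible n eta T \<Longrightarrow> T \<in> clif n"
  unfolding cl_invertible_def by simp

lemma inv_eq_left:
  assumes "cl_invertible n eta T" "V \<in> clif n" "V \<odot> T = cl_one"
  shows "cl_inv n eta T = V"
  using inv_unique_aux[of V "cl_inv n eta T" T] inv_spec[OF assms(1)] assms by simp

lemma inv_eq_right:
  assumes "cl_invertible n eta T" "V \<in> clif n" "T \<odot> V = cl_one"
  shows "cl_inv n eta T = V"
  using inv_unique_aux[of "cl_inv n eta T" V T] inv_spec[OF assms(1)] assms by simp

lemma invertibleI:
  assumes "T \<in> clif n" "V \<in> clif n" "T \<odot> V = cl_one" "V \<odot> T = cl_one"
  shows "cl_invertible n eta T" "cl_inv n eta T = V"
proof -
  show i: "cl_invertible n eta T" unfolding cl_invertible_def using assms by blast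
  show "cl_inv n eta T = V" by (rule inv_eq_left[OF i assms(2,4)])
qed

lemma invertible_left:
  assumes "T \<in> clif n" "V \<in> clif n" "V \<odot> T = cl_one" "cl_invertible n eta V"
  shows "cl_invertible n eta T"
proof -
  have "cl_inv n eta V = T" by (rule inv_eq_right[OF assms(4) assms(1) assms(3)])
  then have "T \<odot> V = cl_one" using inv_spec[OF assms(4)] by simp
  then show ?thesis using invertibleI assms by blast
qed

lemma invertible_mult:
  assumes "cl_invertible n eta T" "cl_invertible n eta S"
  shows "cl_invertible n eta (T \<odot> S)"
        "cl_inv n eta (T \<odot> S) = cl_inv n eta S \<odot> cl_inv n eta T"
proof -
  note t = inv_spec[OF assms(1)] and s = inv_spec[OF assms(2)]
  have "(T \<odot> S) \<odot> (cl_inv n eta S \<odot> cl_inv n eta T) = T \<odot> ((S \<odot> cl_inv n eta S) \<odot> cl_inv n eta T)"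
    by (simp only: mult_assoc')
  also have "\<dots> = cl_one" using t s by (simp add: mult_one_left)
  finally have 1: "(T \<odot> S) \<odot> (cl_inv n eta S \<odot> cl_inv n eta T) = cl_one" .
  have "(cl_inv n eta S \<odot> cl_inv n eta T) \<odot> (T \<odot> S) = cl_inv n eta S \<odot> ((cl_inv n eta T \<odot> T) \<odot> S)"
    by (simp only: mult_assoc')
  also have "\<dots> = cl_one" using t s inv_clif[OF assms(2)] by (simp add: mult_one_left)
  finally have 2: "(cl_inv n eta S \<odot> cl_inv n eta T) \<odot> (T \<odot> S) = cl_one" .
  from 1 2 show "cl_invertible n eta (T \<odot> S)" "cl_inv n eta (T \<odot> S) = cl_inv n eta S \<odot> cl_inv n eta T"
    using invertibleI[of "T \<odot> S" "cl_inv n eta S \<odot> cl_inv n eta T"] mult_clif by auto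
qed

lemma one_invertible: "cl_invertible n eta cl_one" "cl_inv n eta cl_one = cl_one"
  using invertibleI[of cl_one cl_one] one_clif mult_one_left[OF one_clif] by auto

lemma rev_invertible:
  assumes "cl_invertible n eta T"
  shows "cl_invertible n eta (cl_rev T)" "cl_inv n eta (cl_rev T) = cl_rev (cl_inv n eta T)"
proof -
  note t = inv_spec[OF assms]
  have "cl_rev T \<odot> cl_rev (cl_inv n eta T) = cl_one"
    using t by (simp flip: rev_mult add: rev_one)
  moreover have "cl_rev (cl_inv n eta T) \<odot> cl_rev T = cl_one"
    using t by (simp flip: rev_mult add: rev_one)
  moreover have "cl_rev T \<in> clif n" "cl_rev (cl_inv n eta T) \<in> clif n"
    using rev_clif inv_clif[OF assms] t by auto
  ultimately show "cl_invertible n eta (cl_rev T)" "cl_inv n eta (cl_rev T) = cl_rev (cl_inv n eta T)"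
    using invertibleI[of "cl_rev T" "cl_rev (cl_inv n eta T)"] by blast+
qed

lemma hat_invertible:
  assumes "cl_invertible n eta T"
  shows "cl_invertible n eta (hat T)" "cl_inv n eta (hat T) = hat (cl_inv n eta T)"
proof -
  note t = inv_spec[OF assms]
  have "hat T \<odot> hat (cl_inv n eta T) = cl_one"
    using t by (simp flip: hat_mult add: hat_one)
  moreover have "hat (cl_inv n eta T) \<odot> hat T = cl_one"
    using t by (simp flip: hat_mult add: hat_one)
  moreover have "hat T \<in> clif n" "hat (cl_inv n eta T) \<in> clif n"
    using hat_clif inv_clif[OF assms] t by auto
  ultimately show "cl_invertible n eta (hat T)" "cl_inv n eta (hat T) = hat (cl_inv n eta T)"
    using invertibleI[of "hat T" "hat (cl_inv n eta T)"] by blast+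
qed

lemma cancel_left:
  assumes "cl_invertible n eta T" "X \<in> clif n" "T \<odot> X = 0"
  shows "X = 0"
proof -
  note t = inv_spec[OF assms(1)]
  have "X = (cl_inv n eta T \<odot> T) \<odot> X" using t assms by (simp add: mult_one_left)
  also have "\<dots> = 0" using assms by (simp add: mult_assoc)
  finally show ?thesis .
qed

lemma cancel_right:
  assumes "cl_invertible n eta T" "X \<in> clif n" "X \<odot> T = 0"
  shows "X = 0"
proof -
  note t = inv_spec[OF assms(1)]
  have "X = X \<odot> (T \<odot> cl_inv n eta T)" using t assms by (simp add: mult_one_right)
  also have "\<dots> = 0" using assms by (simp flip: mult_assoc)
  finally show ?thesis .
qed

lemma one_ne_zero: "cl_one \<noteq> (0::'a mv)"
proof
  assume "cl_one = (0::'a mv)"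
  then have "cl_one {} = (0::'a mv) {}" by simp
  then show False unfolding cl_one_def by simp
qed

lemma invertible_nz: "cl_invertible n eta T \<Longrightarrow> T \<noteq> 0"
  using inv_spec one_ne_zero by fastforce

lemma grade_mem: "X \<in> grade n k \<longleftrightarrow> X \<in> clif n \<and> (\<forall>A. card A \<noteq> k \<longrightarrow> X A = 0)"
  unfolding grade_def grades_def by auto

lemma rev_grade: "X \<in> grade n k \<Longrightarrow> cl_rev X = sc (rs k) X"
  unfolding grade_mem cl_rev_def sc_def rs_def by (rule ext) auto

lemma hat_grade: "X \<in> grade n k \<Longrightarrow> hat X = sc ((-1) ^ k) X"
  unfolding grade_mem hat_def sc_def by (rule ext) auto

lemma blade_grade: "B \<subseteq> {..<n} \<Longrightarrow> blade B \<in> grade n (card B)"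
  unfolding grade_mem blade_def clif_def by auto

lemma sc_one [simp]: "sc 1 U = U" unfolding sc_def by simp
lemma sc_sc: "sc a (sc b U) = sc (a * b) U" unfolding sc_def by (rule ext) (simp add: mult.assoc)
lemma sc_zero [simp]: "sc 0 U = 0" "sc a 0 = 0" unfolding sc_def by (rule ext, simp)+

lemma sc_cancel: "a \<noteq> 0 \<Longrightarrow> sc a U = sc a V \<Longrightarrow> U = V"
  unfolding sc_def by (rule ext) (metis mult_left_cancel)

lemma rs_nz: "rs k \<noteq> (0::'a)" unfolding rs_def by simp

lemma even_partI: "(X::'a mv) \<in> clif n \<Longrightarrow> hat X = X \<Longrightarrow> X \<in> even_part n"
  unfolding even_part_def grades_def hat_def
proof (clarsimp)
  fix A :: "nat set" assume h: "(\<lambda>A. (-1) ^ card A * X A) = X" and o: "odd (card A)"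
  have "(-1) ^ card A * X A = X A" using fun_cong[OF h, of A] by simp
  then have "- X A = X A" using o by simp
  then show "X A = 0" by (simp add: eq_neg_iff_add_eq_0)
qed

lemma odd_partI: "(X::'a mv) \<in> clif n \<Longrightarrow> hat X = - X \<Longrightarrow> X \<in> odd_part n"
  unfolding odd_part_def grades_def hat_def
proof (clarsimp)
  fix A :: "nat set" assume h: "(\<lambda>A. (-1) ^ card A * X A) = - X" and o: "even (card A)"
  have "(-1) ^ card A * X A = - X A" using fun_cong[OF h, of A] by simp
  then have "- X A = X A" using o by simp
  then show "X A = 0" by (simp add: eq_neg_iff_add_eq_0)
qed

lemma even_hat: "(X::'a mv) \<in> even_part n \<Longrightarrow> hat X = X"
  unfolding even_part_def grades_def hat_def
proof (rule ext)
  fix A :: "nat set" assume "X \<in> {U \<in> clif n. \<forall>A. card A \<notin> {k. even k} \<longrightarrow> U A = 0}"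
  then show "(-1) ^ card A * X A = X A" by (cases "even (card A)") auto
qed
lemma odd_hat: "(X::'a mv) \<in> odd_part n \<Longrightarrow> hat X = - X"
  unfolding odd_part_def grades_def hat_def
proof (rule ext)
  fix A :: "nat set" assume "X \<in> {U \<in> clif n. \<forall>A. card A \<notin> {k. odd k} \<longrightarrow> U A = 0}"
  then show "(-1) ^ card A * X A = (- X) A" by (cases "even (card A)") auto
qed
lemma even_clif: "X \<in> even_part n \<Longrightarrow> X \<in> clif n"
  unfolding even_part_def grades_def by auto
lemma odd_clif: "X \<in> odd_part n \<Longrightarrow> X \<in> clif n"
  unfolding odd_part_def grades_def by auto

end



context cliff
begin

lemma neg1_even: "even k \<Longrightarrow> (-1::'a) ^ k = 1" by simp
lemma neg1_odd: "odd k \<Longrightarrow> (-1::'a) ^ k = -1" by simp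
lemma neg1_eq1: "(-1::'a) ^ k = 1 \<Longrightarrow> even k"
proof (rule ccontr)
  assume "(-1::'a) ^ k = 1" "\<not> even k"
  then have "(-1::'a) = 1" by simp
  then show False by simp
qed

lemma mswap:
  assumes "finite A" "finite B"
  shows "mm eta B A = (-1) ^ (card A * card B + card (A \<inter> B)) * mm eta A B"
proof -
  have c: "binv A B + binv B A + card (A \<inter> B) = card A * card B" by (rule binv_count[OF assms])
  have e: "card A * card B + card (A \<inter> B) + binv A B = binv B A + 2 * (binv A B + card (A \<inter> B))"
    using c by simp
  have "(-1::'a) ^ (card A * card B + card (A \<inter> B)) * (-1) ^ binv A B
      = (-1) ^ (card A * card B + card (A \<inter> B) + binv A B)" by (simp add: power_add)
  also have "\<dots> = (-1) ^ binv B A" unfolding e by (simp add: power_add power_mult)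
  finally have s: "blade_sign B A = (-1::'a) ^ (card A * card B + card (A \<inter> B)) * blade_sign A B"
    unfolding blade_sign_binv by simp
  show ?thesis unfolding mm_def s by (simp add: Int_commute ac_simps)
qed

lemma sdf_back: "sdf B (sdf A B) = A" unfolding sdf_def by blast

lemma comm_coeff:
  assumes B: "B \<subseteq> {..<n}" and c: "N \<odot> blade B = blade B \<odot> N" and A: "A \<subseteq> {..<n}" and nz: "N A \<noteq> 0"
  shows "even (card A * card B + card (A \<inter> B))"
proof -
  let ?C = "sdf A B"
  have C: "?C \<subseteq> {..<n}" by (simp add: sdf_sub A B)
  have 1: "(N \<odot> blade B) ?C = mm eta A B * N A"
    using mult_blade_right[OF B, of N ?C] C by (simp add: sdf_back)
  have 2: "(blade B \<odot> N) ?C = mm eta B A * N A"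
    using mult_blade_left[OF B, of N ?C] C by (simp add: sdf_back)
  have "mm eta A B * N A = (N \<odot> blade B) ?C" using 1 by simp
  also have "\<dots> = (blade B \<odot> N) ?C" using c by simp
  also have "\<dots> = mm eta B A * N A" using 2 by simp
  finally have "mm eta A B * N A = mm eta B A * N A" .
  then have "mm eta A B = mm eta B A" using nz by simp
  also have "\<dots> = (-1) ^ (card A * card B + card (A \<inter> B)) * mm eta A B"
    using A B by (intro mswap) (auto intro: finite_subset)
  finally have "(-1::'a) ^ (card A * card B + card (A \<inter> B)) = 1" using mm_nz[of A B] by simp
  then show ?thesis by (rule neg1_eq1)
qed

lemma commuteI:
  assumes h: "\<And>A B. A \<subseteq> {..<n} \<Longrightarrow> B \<subseteq> {..<n} \<Longrightarrow> N A \<noteq> 0 \<Longrightarrow> U B \<noteq> 0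
      \<Longrightarrow> even (card A * card B + card (A \<inter> B))"
  shows "N \<odot> U = U \<odot> N"
proof (rule ext)
  fix C show "(N \<odot> U) C = (U \<odot> N) C"
  proof (cases "C \<subseteq> {..<n}")
    case True
    have "(U \<odot> N) C = (\<Sum>A\<in>PP. mm eta A (sdf A C) * U A * N (sdf A C))" using True by (simp add: mult_alt)
    also have "\<dots> = (\<Sum>A\<in>PP. mm eta (sdf C A) (sdf (sdf C A) C) * U (sdf C A) * N (sdf (sdf C A) C))"
      by (rule sum_sdf_reindex[OF True])
    also have "\<dots> = (\<Sum>A\<in>PP. mm eta A (sdf A C) * N A * U (sdf A C))"
    proof (rule sum.cong[OF refl])
      fix A assume A: "A \<in> PP"
      have e1: "sdf (sdf C A) C = A" by simp
      have e2: "sdf C A = sdf A C" by (rule sdf_comm)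
      have B: "sdf A C \<subseteq> {..<n}" using A True by (simp add: sdf_sub)
      show "mm eta (sdf C A) (sdf (sdf C A) C) * U (sdf C A) * N (sdf (sdf C A) C) = mm eta A (sdf A C) * N A * U (sdf A C)"
      proof (cases "N A = 0 \<or> U (sdf A C) = 0")
        case True then show ?thesis unfolding e1 e2 by auto
      next
        case False
        then have ev: "even (card A * card (sdf A C) + card (A \<inter> sdf A C))" using h[of A "sdf A C"] A B by auto
        have "mm eta (sdf A C) A = mm eta A (sdf A C)"
          using mswap[of A "sdf A C"] A B ev by (auto intro: finite_subset)
        then show ?thesis unfolding e1 e2 by (simp add: ac_simps)
      qed
    qed
    also have "\<dots> = (N \<odot> U) C" using True by (simp add: mult_alt)
    finally show ?thesis by simp
  qed (simp add: mult_alt)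
qed

definition II :: "'a mv" where "II = blade {..<n}"
definition sg :: "'a" where "sg = mm eta {..<n} {..<n}"
definition cen :: "'a \<Rightarrow> 'a \<Rightarrow> 'a mv" where "cen a b = sc a cl_one + sc b II"

lemma II_clif: "II \<in> clif n" unfolding II_def by (rule blade_clif) simp
lemma cen_clif: "cen a b \<in> clif n" unfolding cen_def by (intro add_clif sc_clif one_clif II_clif)

lemma sg_sq: "sg * sg = 1"
  unfolding sg_def mm_def using bs_sq prod_eta_sq
  by (metis (no_types, lifting) mult.assoc mult.left_commute mult_1)
lemma sg_nz: "sg \<noteq> 0" using sg_sq by auto

lemma II_II: "II \<odot> II = sc sg cl_one"
proof (rule ext)
  fix C
  show "(II \<odot> II) C = sc sg cl_one C"
  proof (cases "C \<subseteq> {..<n}")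
    case True
    have e: "sdf {..<n} C = {..<n} \<longleftrightarrow> C = {}" using True unfolding sdf_def by blast
    have "(II \<odot> II) C = mm eta (sdf {..<n} C) {..<n} * blade {..<n} (sdf {..<n} C)"
      using True unfolding II_def by (simp add: mult_blade_right)
    then show ?thesis using e unfolding blade_def sc_def cl_one_def sg_def by auto
  next
    case False then show ?thesis unfolding II_def
      by (auto simp: mult_blade_right sc_def cl_one_def)
  qed
qed

lemma mult_cen_right: "X \<in> clif n \<Longrightarrow> X \<odot> cen a b = sc a X + sc b (X \<odot> II)"
  unfolding cen_def by (simp add: mult_add_right mult_sc_right mult_one_right)

lemma mult_cen_left: "X \<in> clif n \<Longrightarrow> cen a b \<odot> X = sc a X + sc b (II \<odot> X)"
  unfolding cen_def by (simp add: mult_add_left mult_sc_left mult_one_left)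

lemma cen_mult: "cen a b \<odot> cen c d = cen (a * c + sg * b * d) (a * d + b * c)"
proof -
  have "cen a b \<odot> cen c d = sc a (cen c d) + sc b (II \<odot> cen c d)"
    by (rule mult_cen_left[OF cen_clif])
  also have "II \<odot> cen c d = sc c II + sc d (sc sg cl_one)"
    using mult_cen_right[OF II_clif] II_II by simp
  finally have eq: "cen a b \<odot> cen c d = sc a (cen c d) + sc b (sc c II + sc d (sc sg cl_one))" .
  have "sc a (cen c d) + sc b (sc c II + sc d (sc sg cl_one)) = cen (a * c + sg * b * d) (a * d + b * c)"
    unfolding cen_def by (rule ext) (simp add: sc_def algebra_simps)
  then show ?thesis using eq by simp
qed

lemma cen_add: "cen a b + cen c d = cen (a + c) (b + d)"
  unfolding cen_def by (rule ext) (simp add: sc_def algebra_simps)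
lemma cen_sc: "sc k (cen a b) = cen (k * a) (k * b)"
  unfolding cen_def by (rule ext) (simp add: sc_def algebra_simps)
lemma cen_one: "cen 1 0 = cl_one"
  unfolding cen_def by (rule ext) (simp add: sc_def)
lemma cen_zero: "cen 0 0 = 0"
  unfolding cen_def by (rule ext) (simp add: sc_def)
lemma one_minus_cen: "cl_one - cen a b = cen (1 - a) (- b)"
  unfolding cen_def by (rule ext) (simp add: sc_def algebra_simps)

lemma cen_empty: "0 < n \<Longrightarrow> cen a b {} = a"
  unfolding cen_def II_def by (auto simp: sc_def cl_one_def blade_def)
lemma cen_full: "0 < n \<Longrightarrow> cen a b {..<n} = b"
  unfolding cen_def II_def by (auto simp: sc_def cl_one_def blade_def)

lemma hat_II: "hat II = sc ((-1) ^ n) II"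
  unfolding hat_def II_def sc_def blade_def by (rule ext) auto
lemma rev_II: "cl_rev II = sc (rs n) II"
  unfolding cl_rev_def II_def sc_def blade_def rs_def by (rule ext) auto
lemma hat_cen: "hat (cen a b) = cen a ((-1) ^ n * b)"
  unfolding cen_def hat_add hat_sc hat_one hat_II sc_sc by (simp add: mult.commute)
lemma rev_cen: "cl_rev (cen a b) = cen a (rs n * b)"
  unfolding cen_def rev_add rev_sc rev_one rev_II sc_sc by (simp add: mult.commute)

lemma card_eq_n_full: "A \<subseteq> {..<n} \<Longrightarrow> card A = n \<Longrightarrow> A = {..<n}"
  using card_subset_eq[of "{..<n}" A] by simp

lemma grades0n_cen:
  assumes "0 < n" "X \<in> grades n {0, n}"
  shows "X = cen (X {}) (X {..<n})"
proof (rule clif_eqI)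
  show "X \<in> clif n" using assms unfolding grades_def by auto
  show "cen (X {}) (X {..<n}) \<in> clif n" by (rule cen_clif)
  fix A assume A: "A \<subseteq> {..<n}"
  have fA: "finite A" using A finite_subset by auto
  show "X A = cen (X {}) (X {..<n}) A"
  proof (cases "card A = 0")
    case True then have "A = {}" using fA by simp
    then show ?thesis using assms by (simp add: cen_empty)
  next
    case False
    show ?thesis
    proof (cases "card A = n")
      case True then have "A = {..<n}" using A card_eq_n_full by simp
      then show ?thesis using assms by (simp add: cen_full)
    next
      case False2: False
      have "X A = 0" using assms False False2 unfolding grades_def by auto
      moreover have "A \<noteq> {}" "A \<noteq> {..<n}" using False False2 by auto
      ultimately show ?thesis unfolding cen_def II_def by (simp add: sc_def cl_one_def blade_def)
    qed
  qed
qed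

lemma cen_grades0n: "cen a b \<in> grades n {0, n}"
proof -
  have "\<forall>A. card A \<notin> {0, n} \<longrightarrow> cen a b A = 0"
    unfolding cen_def II_def by (auto simp: sc_def cl_one_def blade_def)
  then show ?thesis unfolding grades_def using cen_clif by simp
qed

lemma cen_grades0: "cen a 0 \<in> grades n {0}"
proof -
  have "\<forall>A. card A \<notin> {0} \<longrightarrow> cen a 0 A = 0"
    unfolding cen_def II_def by (auto simp: sc_def cl_one_def blade_def)
  then show ?thesis unfolding grades_def using cen_clif by simp
qed

lemma grades0_sub: "grades n {0} \<subseteq> grades n {0, n}"
  unfolding grades_def by auto

lemma grades0_cen:
  assumes "0 < n" "X \<in> grades n {0}"
  shows "X = cen (X {}) 0"
proof -
  have "X = cen (X {}) (X {..<n})" using grades0n_cen assms grades0_sub by blast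
  moreover have "X {..<n} = 0" using assms unfolding grades_def by auto
  ultimately show ?thesis by simp
qed

lemma center_odd: "odd n \<Longrightarrow> center n = grades n {0, n}"
  unfolding center_def by simp
lemma center_even: "even n \<Longrightarrow> center n = grades n {0}"
  unfolding center_def by simp

lemma grades0n_commute_odd:
  assumes "odd n" "X \<in> grades n {0, n}"
  shows "X \<odot> U = U \<odot> X"
proof (rule commuteI)
  fix A B assume A: "A \<subseteq> {..<n}" and B: "B \<subseteq> {..<n}" and nz: "X A \<noteq> 0"
  have fA: "finite A" using A finite_subset by auto
  have "card A = 0 \<or> card A = n" using assms nz unfolding grades_def by auto
  then show "even (card A * card B + card (A \<inter> B))"
  proof
    assume "card A = 0" then have "A = {}" using fA by simp
    then show ?thesis by simp
  next
    assume "card A = n" then have "A = {..<n}" using A card_eq_n_full by simp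
    then have "A \<inter> B = B" using B by auto
    then show ?thesis using \<open>card A = n\<close> assms(1) by simp
  qed
qed

lemma grades0n_commute_even:
  assumes "even n" "X \<in> grades n {0, n}" "U \<in> even_part n"
  shows "X \<odot> U = U \<odot> X"
proof (rule commuteI)
  fix A B assume A: "A \<subseteq> {..<n}" and B: "B \<subseteq> {..<n}" and nz: "X A \<noteq> 0" and nzU: "U B \<noteq> 0"
  have fA: "finite A" using A finite_subset by auto
  have eB: "even (card B)" using assms(3) nzU unfolding even_part_def grades_def by auto
  have "card A = 0 \<or> card A = n" using assms nz unfolding grades_def by auto
  then show "even (card A * card B + card (A \<inter> B))"
  proof
    assume "card A = 0" then have "A = {}" using fA by simp
    then show ?thesis by simp
  next
    assume "card A = n" then have "A = {..<n}" using A card_eq_n_full by simp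
    then have "A \<inter> B = B" using B by auto
    then show ?thesis using eB by simp
  qed
qed

lemma II_hat_comm:
  assumes "even n"
  shows "II \<odot> U = hat U \<odot> II"
proof (rule ext)
  fix C show "(II \<odot> U) C = (hat U \<odot> II) C"
  proof (cases "C \<subseteq> {..<n}")
    case True
    let ?B = "sdf {..<n} C"
    have B: "?B \<subseteq> {..<n}" using True by (simp add: sdf_sub)
    have fB: "finite ?B" using B finite_subset by auto
    have i: "{..<n} \<inter> ?B = ?B" using B by auto
    have sw: "mm eta ?B {..<n} = (-1) ^ (n * card ?B + card ?B) * mm eta {..<n} ?B"
      using mswap[of "{..<n}" ?B] fB i by simp
    have "(-1::'a) ^ (n * card ?B + card ?B) * (-1) ^ card ?B = 1"
    proof -
      have ev: "even (n * card ?B + card ?B + card ?B)" using assms by auto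
      have "(-1::'a) ^ (n * card ?B + card ?B) * (-1) ^ card ?B = (-1::'a) ^ (n * card ?B + card ?B + card ?B)"
        by (simp add: power_add)
      also have "\<dots> = 1" using ev by (rule neg1_even)
      finally show ?thesis .
    qed
    then show ?thesis using True unfolding II_def
      by (simp add: mult_blade_right mult_blade_left sw hat_def ac_simps)
  qed (simp add: mult_alt)
qed

end



context cliff
begin

lemma commutant_aux:
  assumes k: "1 \<le> k" "k < n"
    and comm: "\<And>B. B \<subseteq> {..<n} \<Longrightarrow> card B = k \<Longrightarrow> N \<odot> blade B = blade B \<odot> N"
    and A: "A \<subseteq> {..<n}" and nz: "N A \<noteq> 0"
  shows "card A = 0 \<or> (card A = n \<and> even ((n + 1) * k))"
proof -
  have ev: "even (card A * k + card (A \<inter> B))" if "B \<subseteq> {..<n}" "card B = k" for B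
    using comm_coeff[OF that(1) comm[OF that] A nz] that(2) by simp
  have fA: "finite A" using A finite_subset by auto
  show ?thesis
  proof (cases "card A = 0 \<or> card A = n")
    case True
    then show ?thesis
    proof
      assume "card A = n"
      then have Af: "A = {..<n}" using A card_eq_n_full by simp
      obtain B where B: "B \<subseteq> {..<n}" "card B = k" using obtain_subset_with_card_n[of k "{..<n}"] k by auto
      have "A \<inter> B = B" using B Af by auto
      then have "even (n * k + k)" using ev[OF B] \<open>card A = n\<close> B by simp
      then show ?thesis using \<open>card A = n\<close> by (simp add: algebra_simps)
    qed simp
  next
    case False
    then have "A \<noteq> {}" using fA by auto
    then obtain a where a: "a \<in> A" by auto
    have "A \<noteq> {..<n}" using False by auto
    then obtain a' where a': "a' \<in> {..<n}" "a' \<notin> A" using A by auto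
    have an: "a \<in> {..<n}" using a A by auto
    have aa: "a \<noteq> a'" using a a' by auto
    let ?R = "{..<n} - {a, a'}"
    have cR: "card ?R = n - 2" using an a' aa by (simp add: card_Diff_subset)
    have "k - 1 \<le> card ?R" using cR k by simp
    then obtain B0 where B0: "B0 \<subseteq> ?R" "card B0 = k - 1" "finite B0"
      using obtain_subset_with_card_n by blast
    let ?B1 = "insert a B0" and ?B2 = "insert a' B0"
    have aB0: "a \<notin> B0" "a' \<notin> B0" using B0 by auto
    have B1: "?B1 \<subseteq> {..<n}" "card ?B1 = k" using B0 an aB0 k by auto
    have B2: "?B2 \<subseteq> {..<n}" "card ?B2 = k" using B0 a' aB0 k by auto
    have i1: "A \<inter> ?B1 = insert a (A \<inter> B0)" using a by auto
    have i2: "A \<inter> ?B2 = A \<inter> B0" using a' by auto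
    have c1: "card (A \<inter> ?B1) = card (A \<inter> B0) + 1"
      unfolding i1 using B0 aB0 by (simp add: card_insert_if)
    have "even (card A * k + card (A \<inter> B0) + 1)" using ev[OF B1] c1 by simp
    moreover have "even (card A * k + card (A \<inter> B0))" using ev[OF B2] i2 by simp
    ultimately show ?thesis by simp
  qed
qed

lemma commutant_grades:
  assumes k: "1 \<le> k" "k < n" "N \<in> clif n"
    and comm: "\<And>B. B \<subseteq> {..<n} \<Longrightarrow> card B = k \<Longrightarrow> N \<odot> blade B = blade B \<odot> N"
  shows "N \<in> grades n {0, n}" "odd ((n + 1) * k) \<Longrightarrow> N \<in> grades n {0}"
proof -
  have h: "N A = 0 \<or> card A = 0 \<or> (card A = n \<and> even ((n + 1) * k))" for A
  proof (cases "A \<subseteq> {..<n}")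
    case True then show ?thesis using commutant_aux[OF k(1,2) comm True] by blast
  next
    case False then show ?thesis using clif_out[OF k(3)] by simp
  qed
  have "\<forall>A. card A \<notin> {0, n} \<longrightarrow> N A = 0"
  proof (intro allI impI)
    fix A :: "nat set" assume "card A \<notin> {0, n}" then show "N A = 0" using h[of A] by auto
  qed
  then show "N \<in> grades n {0, n}" unfolding grades_def using k(3) by auto
  assume o: "odd ((n + 1) * k)"
  have "\<forall>A. card A \<notin> {0} \<longrightarrow> N A = 0"
  proof (intro allI impI)
    fix A :: "nat set" assume "card A \<notin> {0}" then show "N A = 0" using h[of A] o by auto
  qed
  then show "N \<in> grades n {0}" unfolding grades_def using k(3) by auto
qed

lemma inv_cancel:
  assumes "cl_invertible n eta T" "Z \<in> clif n"
  shows "T \<odot> (cl_inv n eta T \<odot> Z) = Z" "cl_inv n eta T \<odot> (T \<odot> Z) = Z"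
  using inv_spec[OF assms(1)] assms(2) by (simp_all add: mult_one_left flip: mult_assoc')

lemma inv_cancel_r:
  assumes "cl_invertible n eta T" "Z \<in> clif n"
  shows "Z \<odot> (T \<odot> cl_inv n eta T) = Z" "Z \<odot> (cl_inv n eta T \<odot> T) = Z"
  using inv_spec[OF assms(1)] assms(2) by (simp_all add: mult_one_right)

lemma grade_clif: "X \<in> grade n k \<Longrightarrow> X \<in> clif n"
  unfolding grade_mem by simp

lemma gamma_rev_comm:
  assumes G: "T \<in> Gamma n eta k" and X: "X \<in> grade n k"
  shows "(cl_rev T \<odot> T) \<odot> X = X \<odot> (cl_rev T \<odot> T)"
proof -
  have inv: "cl_invertible n eta T" using G unfolding Gamma_def by simp
  let ?Ti = "cl_inv n eta T"
  note t = inv_spec[OF inv]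
  define Y where "Y = T \<odot> X \<odot> ?Ti"
  have Y: "Y \<in> grade n k" using G X unfolding Gamma_def Y_def by simp
  have Xc: "X \<in> clif n" using X by (rule grade_clif)
  have "cl_rev Y = cl_rev ?Ti \<odot> (cl_rev X \<odot> cl_rev T)" unfolding Y_def by (simp add: rev_mult)
  then have "sc (rs k) Y = sc (rs k) (cl_rev ?Ti \<odot> (X \<odot> cl_rev T))"
    using rev_grade[OF Y] rev_grade[OF X] by (simp add: mult_sc_left mult_sc_right)
  then have Y2: "Y = cl_rev ?Ti \<odot> (X \<odot> cl_rev T)" using sc_cancel rs_nz by blast
  have TX: "T \<odot> X = Y \<odot> T" unfolding Y_def using inv_cancel_r[OF inv, of "T \<odot> X"] mult_clif
    by (simp add: mult_assoc')
  have rr: "cl_rev T \<odot> cl_rev ?Ti = cl_one" using t by (simp flip: rev_mult add: rev_one)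
  have "(cl_rev T \<odot> T) \<odot> X = cl_rev T \<odot> (Y \<odot> T)" using TX by (simp add: mult_assoc')
  also have "\<dots> = (cl_rev T \<odot> cl_rev ?Ti) \<odot> (X \<odot> (cl_rev T \<odot> T))" unfolding Y2 by (simp add: mult_assoc')
  also have "\<dots> = X \<odot> (cl_rev T \<odot> T)" unfolding rr by (simp add: mult_one_left mult_clif)
  finally show ?thesis .
qed

lemma gamma_N_grades:
  assumes G: "T \<in> Gamma n eta k" and k: "1 \<le> k" "k < n"
  shows "cl_rev T \<odot> T \<in> grades n {0, n}" "odd ((n + 1) * k) \<Longrightarrow> cl_rev T \<odot> T \<in> grades n {0}"
proof -
  have c: "(cl_rev T \<odot> T) \<odot> blade B = blade B \<odot> (cl_rev T \<odot> T)" if "B \<subseteq> {..<n}" "card B = k" for B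
    using gamma_rev_comm[OF G] blade_grade[OF that(1)] that(2) by simp
  show "cl_rev T \<odot> T \<in> grades n {0, n}" "odd ((n + 1) * k) \<Longrightarrow> cl_rev T \<odot> T \<in> grades n {0}"
    using commutant_grades[OF k mult_clif c] by blast+
qed

end



context cliff
begin

definition ev :: "'a mv \<Rightarrow> 'a mv" where "ev T = sc (1/2) (T + hat T)"
definition od :: "'a mv \<Rightarrow> 'a mv" where "od T = sc (1/2) (T - hat T)"

lemma ev_od: "ev T + od T = T"
  unfolding ev_def od_def sc_def by (rule ext) (simp add: field_simps)
lemma T_minus_ev: "T - ev T = od T"
  using ev_od[of T] by (simp add: algebra_simps)
lemma ev_clif: "T \<in> clif n \<Longrightarrow> ev T \<in> clif n"
  unfolding ev_def by (intro sc_clif add_clif hat_clif)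
lemma od_clif: "T \<in> clif n \<Longrightarrow> od T \<in> clif n"
  unfolding od_def by (intro sc_clif diff_clif hat_clif)
lemma hat_ev: "hat (ev T) = ev T"
  unfolding ev_def hat_sc hat_add hat_hat by (simp add: add.commute)
lemma hat_od: "hat (od T) = - od T"
  unfolding od_def hat_def sc_def by (rule ext) (simp add: algebra_simps)
lemma ev_even: "T \<in> clif n \<Longrightarrow> ev T \<in> even_part n"
  by (rule even_partI[OF ev_clif hat_ev])
lemma od_odd: "T \<in> clif n \<Longrightarrow> od T \<in> odd_part n"
  by (rule odd_partI[OF od_clif hat_od])

lemma hat_minus: "hat (- U) = - hat U" unfolding hat_def by (rule ext) simp
lemma mult_minus_left: "(- U) \<odot> V = - (U \<odot> V)"
  using mult_diff_left[of 0 U V] by simp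
lemma mult_minus_right: "V \<odot> (- U) = - (V \<odot> U)"
  using mult_diff_right[of V 0 U] by simp

lemma cen_inv:
  assumes d: "a * a - sg * b * b \<noteq> 0"
  defines "ci \<equiv> cen (a / (a * a - sg * b * b)) (- b / (a * a - sg * b * b))"
  shows "cen a b \<odot> ci = cl_one" "ci \<odot> cen a b = cl_one" "cl_invertible n eta (cen a b)"
    "cl_invertible n eta ci"
proof -
  let ?d = "a * a - sg * b * b"
  have x1: "a * (a / ?d) + sg * b * (- b / ?d) = 1"
  proof -
    have "a * (a / ?d) + sg * b * (- b / ?d) = (a * a) / ?d - (sg * b * b) / ?d" by simp
    also have "\<dots> = ?d / ?d" by (rule diff_divide_distrib[symmetric])
    also have "\<dots> = 1" by (rule divide_self[OF d])
    finally show ?thesis .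
  qed
  have x2: "a * (- b / ?d) + b * (a / ?d) = 0" by (simp add: algebra_simps)
  have x3: "(a / ?d) * a + sg * (- b / ?d) * b = 1" using x1 by (simp add: ac_simps)
  have x4: "(a / ?d) * b + (- b / ?d) * a = 0" using x2 by (simp add: ac_simps)
  have "cen a b \<odot> ci = cen (a * (a / ?d) + sg * b * (- b / ?d)) (a * (- b / ?d) + b * (a / ?d))"
    unfolding ci_def by (rule cen_mult)
  also have "\<dots> = cen 1 0" unfolding x1 x2 ..
  finally show 1: "cen a b \<odot> ci = cl_one" by (simp add: cen_one)
  have "ci \<odot> cen a b = cen ((a / ?d) * a + sg * (- b / ?d) * b) ((a / ?d) * b + (- b / ?d) * a)"
    unfolding ci_def by (rule cen_mult)
  also have "\<dots> = cen 1 0" unfolding x3 x4 ..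
  finally show 2: "ci \<odot> cen a b = cl_one" by (simp add: cen_one)
  have cc: "ci \<in> clif n" unfolding ci_def by (rule cen_clif)
  show "cl_invertible n eta (cen a b)" using invertibleI[OF cen_clif cc 1 2] by simp
  show "cl_invertible n eta ci" using invertibleI[OF cc cen_clif 2 1] by simp
qed

lemma PsetI:
  assumes "W \<in> center n" "cl_invertible n eta W"
    "(S \<in> even_part n \<or> S \<in> odd_part n)" "cl_invertible n eta S"
  shows "W \<odot> S \<in> Pset n eta"
  unfolding Pset_def units_in_def using assms by blast

lemma one_center: "(cl_one::'a mv) \<in> center n"
proof -
  have "cen 1 0 \<in> grades n {0}" by (rule cen_grades0)
  then have "cen 1 0 \<in> center n" unfolding center_def using grades0_sub by auto
  then show ?thesis by (simp add: cen_one)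
qed

lemma even_P:
  assumes "cl_invertible n eta T" "T \<in> even_part n \<or> T \<in> odd_part n"
  shows "T \<in> Pset n eta"
  using PsetI[OF one_center one_invertible(1) assms(2,1)] mult_one_left[OF inv_clif[OF assms(1)]] by simp

lemma half_ne: "(1::'a) / 2 \<noteq> 0" by simp

lemma both_zero:
  assumes "a * a - sg * b * b = 0" "(1 - a) * (1 - a) - sg * (- b) * (- b) = 0"
  shows "a = 1/2" "cen a b \<odot> cen (1 - a) (- b) = 0"
proof -
  have "a * a = (1 - a) * (1 - a)" using assms by (simp add: algebra_simps)
  then show a: "a = 1/2" by (simp add: algebra_simps)
  have "cen a b \<odot> cen (1 - a) (- b) = cen (a * (1 - a) + sg * b * (- b)) (a * (- b) + b * (1 - a))"
    by (rule cen_mult)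
  also have "\<dots> = cen 0 0"
  proof -
    have y1: "a * (1 - a) + sg * b * (- b) = 0"
    proof -
      have "sg * b * b = a * a" using assms(1) by simp
      then have "a * (1 - a) + sg * b * (- b) = a - 2 * (a * a)" by (simp add: algebra_simps)
      also have "\<dots> = 0" unfolding a by simp
      finally show ?thesis .
    qed
    have y2: "a * (- b) + b * (1 - a) = 0" using a by (simp add: algebra_simps)
    show ?thesis unfolding y1 y2 ..
  qed
  finally show "cen a b \<odot> cen (1 - a) (- b) = 0" by (simp add: cen_zero)
qed

lemma step2_odd:
  assumes n: "odd n" and inv: "cl_invertible n eta T" and c: "c \<in> grades n {0, n}"
    and Tc: "T \<odot> c = ev T"
  shows "T \<in> Pset n eta"
proof -
  have n0: "0 < n" using n by (cases n) auto
  have Tcl: "T \<in> clif n" by (rule inv_clif[OF inv])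
  define a where "a = c {}"
  define b where "b = c {..<n}"
  have ceq: "c = cen a b" unfolding a_def b_def by (rule grades0n_cen[OF n0 c])
  have Tc': "T \<odot> cen (1 - a) (- b) = od T"
  proof -
    have "T \<odot> cen (1 - a) (- b) = T \<odot> (cl_one - c)" unfolding ceq one_minus_cen ..
    also have "\<dots> = T - ev T" by (simp add: mult_diff_right mult_one_right Tcl Tc)
    finally show ?thesis by (simp add: T_minus_ev)
  qed
  have comm: "cen x y \<odot> U = U \<odot> cen x y" for x y U
    by (rule grades0n_commute_odd[OF n cen_grades0n])
  have cenC: "cen x y \<in> center n" for x y unfolding center_def using n cen_grades0n by simp
  show ?thesis
  proof (cases "a * a - sg * b * b = 0")
    case False
    define ci where "ci = cen (a / (a * a - sg * b * b)) (- b / (a * a - sg * b * b))"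
    note ci = cen_inv[OF False, folded ci_def]
    have evinv: "cl_invertible n eta (ev T)" using invertible_mult(1)[OF inv ci(3)] Tc ceq by simp
    have "T = T \<odot> (cen a b \<odot> ci)" using ci(1) Tcl by (simp add: mult_one_right)
    also have "\<dots> = ev T \<odot> ci" using Tc ceq by (simp flip: mult_assoc')
    also have "\<dots> = ci \<odot> ev T" unfolding ci_def by (rule comm[symmetric])
    finally have "T = ci \<odot> ev T" .
    then show ?thesis using PsetI[OF _ ci(4) _ evinv] cenC ev_even[OF Tcl] unfolding ci_def by simp
  next
    case True
    show ?thesis
    proof (cases "(1 - a) * (1 - a) - sg * (- b) * (- b) = 0")
      case False
      let ?a = "1 - a" and ?b = "- b"
      define ci where "ci = cen (?a / (?a * ?a - sg * ?b * ?b)) (- ?b / (?a * ?a - sg * ?b * ?b))"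
      note ci = cen_inv[OF False, folded ci_def]
      have odinv: "cl_invertible n eta (od T)" using invertible_mult(1)[OF inv ci(3)] Tc' by simp
      have "T = T \<odot> (cen ?a ?b \<odot> ci)" using ci(1) Tcl by (simp add: mult_one_right)
      also have "\<dots> = od T \<odot> ci" using Tc' by (simp flip: mult_assoc')
      also have "\<dots> = ci \<odot> od T" unfolding ci_def by (rule comm[symmetric])
      finally have "T = ci \<odot> od T" .
      then show ?thesis using PsetI[OF _ ci(4) _ odinv] cenC od_odd[OF Tcl] unfolding ci_def by simp
    next
      case True2: True
      note bz = both_zero[OF True True2]
      have "ev T \<odot> cen (1 - a) (- b) = (T \<odot> cen a b) \<odot> cen (1 - a) (- b)" using Tc ceq by simp
      also have "\<dots> = T \<odot> (cen a b \<odot> cen (1 - a) (- b))" by (rule mult_assoc')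
      also have "\<dots> = 0" using bz(2) by simp
      finally have e0: "ev T \<odot> cen (1 - a) (- b) = 0" .
      have "hat (ev T \<odot> cen (1 - a) (- b)) = ev T \<odot> cen (1 - a) b"
        unfolding hat_mult hat_ev hat_cen using n by simp
      moreover have "hat (ev T \<odot> cen (1 - a) (- b)) = 0" unfolding e0 hat_def by (rule ext) simp
      ultimately have e1: "ev T \<odot> cen (1 - a) b = 0" by simp
      have "ev T \<odot> (cen (1 - a) (- b) + cen (1 - a) b) = 0" using e0 e1 by (simp add: mult_add_right)
      moreover have "cen (1 - a) (- b) + cen (1 - a) b = cl_one"
        unfolding cen_add bz(1) by (simp add: cen_one)
      ultimately have "ev T = 0" using ev_clif[OF Tcl] by (simp add: mult_one_right)
      then have "T \<odot> c = 0" using Tc by simp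
      then have "c = 0" using cancel_left[OF inv] c unfolding grades_def by auto
      then have "a = 0" unfolding a_def by simp
      then show ?thesis using bz(1) by simp
    qed
  qed
qed

lemma step2_even:
  assumes n: "even n" "0 < n" and inv: "cl_invertible n eta T" and c: "c \<in> grades n {0, n}"
    and Tc: "T \<odot> c = ev T"
  shows "T \<in> Pset n eta"
proof -
  have Tcl: "T \<in> clif n" by (rule inv_clif[OF inv])
  define a where "a = c {}"
  define b where "b = c {..<n}"
  have ceq: "c = cen a b" unfolding a_def b_def by (rule grades0n_cen[OF n(2) c])
  have hc: "hat c = c" unfolding ceq hat_cen using n by simp
  have "hat T \<odot> c = ev T" using arg_cong[OF Tc, of hat] unfolding hat_mult hat_ev hc .
  then have odc: "od T \<odot> c = 0" using Tc unfolding od_def by (simp add: mult_sc_left mult_diff_left)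
  have evc: "ev T \<odot> c = ev T"
  proof -
    have "T - od T = ev T" using ev_od[of T] by (metis add_diff_cancel)
    then have "ev T \<odot> c = (T - od T) \<odot> c" by simp
    then show ?thesis using Tc odc by (simp add: mult_diff_left)
  qed
  have evc': "ev T \<odot> cen (1 - a) (- b) = 0"
  proof -
    have "ev T \<odot> cen (1 - a) (- b) = ev T \<odot> (cl_one - c)" unfolding ceq one_minus_cen ..
    also have "\<dots> = 0" using evc ev_clif[OF Tcl] by (simp add: mult_diff_right mult_one_right)
    finally show ?thesis .
  qed
  show ?thesis
  proof (cases "a * a - sg * b * b = 0")
    case False
    define ci where "ci = cen (a / (a * a - sg * b * b)) (- b / (a * a - sg * b * b))"
    note ci = cen_inv[OF False, folded ci_def]
    have "od T = od T \<odot> (cen a b \<odot> ci)" using ci(1) od_clif[OF Tcl] by (simp add: mult_one_right)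
    also have "\<dots> = 0" using odc ceq by (simp flip: mult_assoc')
    finally have "T = ev T" using ev_od[of T] by simp
    then show ?thesis using even_P[OF inv] ev_even[OF Tcl] by simp
  next
    case True
    show ?thesis
    proof (cases "(1 - a) * (1 - a) - sg * (- b) * (- b) = 0")
      case False
      let ?a = "1 - a" and ?b = "- b"
      define ci where "ci = cen (?a / (?a * ?a - sg * ?b * ?b)) (- ?b / (?a * ?a - sg * ?b * ?b))"
      note ci = cen_inv[OF False, folded ci_def]
      have "ev T = ev T \<odot> (cen ?a ?b \<odot> ci)" using ci(1) ev_clif[OF Tcl] by (simp add: mult_one_right)
      also have "\<dots> = 0" using evc' by (simp flip: mult_assoc')
      finally have "T = od T" using ev_od[of T] by simp
      then show ?thesis using even_P[OF inv] od_odd[OF Tcl] by simp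
    next
      case True2: True
      note bz = both_zero[OF True True2]
      let ?c' = "cen (1 - a) (- b)"
      have "?c' \<odot> ev T = ev T \<odot> ?c'"
        by (rule grades0n_commute_even[OF n(1) cen_grades0n ev_even[OF Tcl]])
      then have z1: "?c' \<odot> ev T = 0" using evc' by simp
      have "?c' \<odot> od T = sc (1 - a) (od T) + sc (- b) (II \<odot> od T)"
        by (rule mult_cen_left[OF od_clif[OF Tcl]])
      also have "II \<odot> od T = - (od T \<odot> II)"
        unfolding II_hat_comm[OF n(1)] hat_od by (simp add: mult_minus_left)
      also have "sc (1 - a) (od T) + sc (- b) (- (od T \<odot> II)) = od T \<odot> cen a b"
      proof -
        have oa: "1 - a = a" unfolding bz(1) by simp
        show ?thesis unfolding mult_cen_right[OF od_clif[OF Tcl]] oa by (rule ext) (simp add: sc_def)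
      qed
      also have "\<dots> = 0" using odc ceq by simp
      finally have z2: "?c' \<odot> od T = 0" .
      have "?c' \<odot> T = ?c' \<odot> ev T + ?c' \<odot> od T" using ev_od[of T] mult_add_right by metis
      then have "?c' \<odot> T = 0" using z1 z2 by simp
      then have "?c' = 0" using cancel_right[OF inv cen_clif] by simp
      then have "?c' {} = 0" by simp
      then have "1 - a = 0" using cen_empty[OF n(2)] by simp
      then show ?thesis using bz(1) by simp
    qed
  qed
qed

end



context cliff
begin

lemma center_odd': "odd n \<Longrightarrow> (center n :: 'a mv set) = grades n {0, n}"
  unfolding center_def by simp
lemma center_even': "even n \<Longrightarrow> (center n :: 'a mv set) = grades n {0}"
  unfolding center_def by simp

lemma gamma_inv: "T \<in> Gamma n eta k \<Longrightarrow> cl_invertible n eta T"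
  unfolding Gamma_def by simp

lemma gamma_M0_comm:
  assumes G: "T \<in> Gamma n eta k" and X: "X \<in> grade n k"
  shows "(cl_inv n eta T \<odot> ev T) \<odot> X = X \<odot> (cl_inv n eta T \<odot> ev T)"
proof -
  have inv: "cl_invertible n eta T" by (rule gamma_inv[OF G])
  let ?Ti = "cl_inv n eta T"
  note t = inv_spec[OF inv]
  define Y where "Y = T \<odot> X \<odot> ?Ti"
  have Y: "Y \<in> grade n k" using G X unfolding Gamma_def Y_def by simp
  have Xc: "X \<in> clif n" using X by (rule grade_clif)
  have Tcl: "T \<in> clif n" by (rule inv_clif[OF inv])
  have TX: "T \<odot> X = Y \<odot> T" unfolding Y_def using inv_cancel_r[OF inv, of "T \<odot> X"] mult_clif
    by (simp add: mult_assoc')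
  have "hat T \<odot> hat X = hat Y \<odot> hat T" using arg_cong[OF TX, of hat] by (simp add: hat_mult)
  then have "sc ((-1) ^ k) (hat T \<odot> X) = sc ((-1) ^ k) (Y \<odot> hat T)"
    unfolding hat_grade[OF X] hat_grade[OF Y] by (simp add: mult_sc_left mult_sc_right)
  then have hTX: "hat T \<odot> X = Y \<odot> hat T" by (rule sc_cancel[rotated]) simp
  have evX: "ev T \<odot> X = Y \<odot> ev T"
    unfolding ev_def mult_sc_left mult_sc_right mult_add_left mult_add_right TX hTX ..
  have "(?Ti \<odot> ev T) \<odot> X = ?Ti \<odot> (Y \<odot> ev T)" using evX by (simp add: mult_assoc')
  also have "\<dots> = ?Ti \<odot> (T \<odot> (X \<odot> (?Ti \<odot> ev T)))" unfolding Y_def by (simp add: mult_assoc')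
  also have "\<dots> = X \<odot> (?Ti \<odot> ev T)" using inv_cancel(2)[OF inv] mult_clif by simp
  finally show ?thesis .
qed

lemma gamma_P:
  assumes G: "T \<in> Gamma n eta k" and k: "1 \<le> k" "k < n"
  shows "T \<in> Pset n eta"
proof -
  have inv: "cl_invertible n eta T" by (rule gamma_inv[OF G])
  let ?M = "cl_inv n eta T \<odot> ev T"
  have c: "?M \<odot> blade B = blade B \<odot> ?M" if "B \<subseteq> {..<n}" "card B = k" for B
    using gamma_M0_comm[OF G] blade_grade[OF that(1)] that(2) by simp
  have M: "?M \<in> grades n {0, n}" using commutant_grades(1)[OF k mult_clif c] by blast
  have TM: "T \<odot> ?M = ev T" using inv_cancel(1)[OF inv ev_clif[OF inv_clif[OF inv]]] .
  have n0: "0 < n" using k by simp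
  show ?thesis
  proof (cases "odd n")
    case True then show ?thesis by (rule step2_odd[OF _ inv M TM])
  next
    case False then show ?thesis using step2_even[OF _ n0 inv M TM] by simp
  qed
qed

lemma gamma_Q:
  assumes G: "T \<in> Gamma n eta k" and k: "1 \<le> k" "k < n" and o: "odd n \<or> odd ((n + 1) * k)"
  shows "T \<in> Qset n eta"
proof -
  have inv: "cl_invertible n eta T" by (rule gamma_inv[OF G])
  have P: "T \<in> Pset n eta" by (rule gamma_P[OF G k])
  have Ninv: "cl_invertible n eta (cl_rev T \<odot> T)"
    by (rule invertible_mult(1)[OF rev_invertible(1)[OF inv] inv])
  have "cl_rev T \<odot> T \<in> center n"
  proof (cases "odd n")
    case True then show ?thesis using gamma_N_grades(1)[OF G k] center_odd' by simp
  next
    case False then have "odd ((n + 1) * k)" using o by simp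
    then show ?thesis using gamma_N_grades(2)[OF G k] center_even' False by simp
  qed
  then show ?thesis unfolding Qset_def units_in_def using P Ninv by simp
qed

lemma center_commute:
  assumes "W \<in> center n"
  shows "W \<odot> U = U \<odot> W"
proof (cases "odd n")
  case True then show ?thesis using grades0n_commute_odd assms center_odd' by simp
next
  case False
  then have W0: "W \<in> grades n {0}" using assms center_even' by simp
  show ?thesis
  proof (rule commuteI)
    fix A B assume A: "A \<subseteq> {..<n}" and nz: "W A \<noteq> 0"
    have "card A = 0" using W0 nz unfolding grades_def by auto
    moreover have "finite A" using A finite_subset by auto
    ultimately have "A = {}" by simp
    then show "even (card A * card B + card (A \<inter> B))" by simp
  qed
qed

lemma conj_rev:
  assumes inv: "cl_invertible n eta T" and X: "X \<in> clif n"
    and NX: "(cl_rev T \<odot> T) \<odot> X = X \<odot> (cl_rev T \<odot> T)" and rX: "cl_rev X = sc r X"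
  shows "cl_rev (T \<odot> X \<odot> cl_inv n eta T) = sc r (T \<odot> X \<odot> cl_inv n eta T)"
proof -
  let ?Ti = "cl_inv n eta T" and ?N = "cl_rev T \<odot> T"
  note t = inv_spec[OF inv]
  have r1: "cl_rev T = ?N \<odot> ?Ti" using t rev_clif[OF inv_clif[OF inv]] by (simp add: mult_assoc' mult_one_right)
  have rr: "cl_rev ?Ti \<odot> cl_rev T = cl_one" using t by (simp flip: rev_mult add: rev_one)
  have r2: "cl_rev ?Ti \<odot> ?N = T" using rr inv_clif[OF inv] by (simp flip: mult_assoc' add: mult_one_left)
  have "cl_rev (T \<odot> X \<odot> ?Ti) = cl_rev ?Ti \<odot> (cl_rev X \<odot> cl_rev T)" by (simp add: rev_mult)
  also have "\<dots> = sc r (cl_rev ?Ti \<odot> (X \<odot> (?N \<odot> ?Ti)))" unfolding rX r1[symmetric] by (simp add: mult_sc_left mult_sc_right)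
  also have "cl_rev ?Ti \<odot> (X \<odot> (?N \<odot> ?Ti)) = cl_rev ?Ti \<odot> ((X \<odot> ?N) \<odot> ?Ti)"
    by (simp only: mult_assoc')
  also have "\<dots> = cl_rev ?Ti \<odot> ((?N \<odot> X) \<odot> ?Ti)" unfolding NX ..
  also have "\<dots> = (cl_rev ?Ti \<odot> ?N) \<odot> X \<odot> ?Ti" by (simp only: mult_assoc')
  also have "\<dots> = T \<odot> X \<odot> ?Ti" unfolding r2 ..
  finally show ?thesis .
qed

lemma conj_scalar:
  assumes inv: "cl_invertible n eta T" and X: "X \<in> clif n" and Z: "Z \<in> clif n"
    and ZT: "Z \<odot> cl_inv n eta T = cl_inv n eta T \<odot> Z"
  shows "((T \<odot> X \<odot> cl_inv n eta T) \<odot> Z) {} = (X \<odot> Z) {}"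
proof -
  let ?Ti = "cl_inv n eta T"
  have "(T \<odot> X \<odot> ?Ti) \<odot> Z = T \<odot> ((X \<odot> Z) \<odot> ?Ti)" using ZT by (simp add: mult_assoc')
  then have "((T \<odot> X \<odot> ?Ti) \<odot> Z) {} = (((X \<odot> Z) \<odot> ?Ti) \<odot> T) {}" by (simp add: scalar_cyclic)
  also have "((X \<odot> Z) \<odot> ?Ti) \<odot> T = X \<odot> Z" using inv_cancel_r(2)[OF inv Z] by (simp add: mult_assoc')
  finally show ?thesis .
qed

lemma scalar_one: "U \<in> clif n \<Longrightarrow> (U \<odot> cl_one) {} = U {}"
  by (simp add: mult_one_right)

lemma scalar_II: "(U \<odot> II) {} = sg * U {..<n}"
  unfolding II_def sg_def by (simp add: mult_blade_right)

lemma conj_central: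
  assumes W: "cl_invertible n eta W" "W \<in> center n" and S: "cl_invertible n eta S" and X: "X \<in> clif n"
  shows "(W \<odot> S) \<odot> X \<odot> cl_inv n eta (W \<odot> S) = S \<odot> X \<odot> cl_inv n eta S"
proof -
  let ?Wi = "cl_inv n eta W" and ?Si = "cl_inv n eta S"
  have "cl_inv n eta (W \<odot> S) = ?Si \<odot> ?Wi" by (rule invertible_mult(2)[OF W(1) S])
  then have "(W \<odot> S) \<odot> X \<odot> cl_inv n eta (W \<odot> S) = W \<odot> (S \<odot> X \<odot> ?Si) \<odot> ?Wi" by (simp add: mult_assoc')
  also have "\<dots> = (S \<odot> X \<odot> ?Si) \<odot> (W \<odot> ?Wi)" using center_commute[OF W(2)] by (simp add: mult_assoc')
  also have "\<dots> = S \<odot> X \<odot> ?Si" using inv_spec[OF W(1)] mult_clif by (simp add: mult_one_right)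
  finally show ?thesis .
qed

lemma neg_inv:
  assumes inv: "cl_invertible n eta S"
  shows "cl_inv n eta (- S) = - cl_inv n eta S" "cl_invertible n eta (- S)"
proof -
  note s = inv_spec[OF inv]
  have 1: "(- S) \<odot> (- cl_inv n eta S) = cl_one" using s by (simp add: mult_minus_left mult_minus_right)
  have 2: "(- cl_inv n eta S) \<odot> (- S) = cl_one" using s by (simp add: mult_minus_left mult_minus_right)
  have c: "- S \<in> clif n" "- cl_inv n eta S \<in> clif n" using s inv_clif[OF inv] unfolding clif_def by auto
  show "cl_inv n eta (- S) = - cl_inv n eta S" "cl_invertible n eta (- S)"
    using invertibleI[OF c 1 2] by auto
qed

lemma hat_conj:
  assumes S: "cl_invertible n eta S" "S \<in> even_part n \<or> S \<in> odd_part n"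
  shows "hat (S \<odot> X \<odot> cl_inv n eta S) = S \<odot> hat X \<odot> cl_inv n eta S"
  using S(2)
proof
  assume e: "S \<in> even_part n"
  have "hat (cl_inv n eta S) = cl_inv n eta S" using hat_invertible(2)[OF S(1)] even_hat[OF e] by simp
  then show ?thesis using even_hat[OF e] by (simp add: hat_mult)
next
  assume o: "S \<in> odd_part n"
  have "hat (cl_inv n eta S) = - cl_inv n eta S"
    using hat_invertible(2)[OF S(1)] odd_hat[OF o] neg_inv(1)[OF S(1)] by simp
  then show ?thesis using odd_hat[OF o] by (simp add: hat_mult mult_minus_left mult_minus_right)
qed

lemma rev_zero: "cl_rev Y = sc r Y \<Longrightarrow> rs (card A) \<noteq> r \<Longrightarrow> Y A = 0"
  unfolding cl_rev_def sc_def rs_def by (drule fun_cong[of _ _ A]) auto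

lemma hat_zero: "hat Y = sc r Y \<Longrightarrow> (-1) ^ card A \<noteq> r \<Longrightarrow> Y A = 0"
  unfolding hat_def sc_def by (drule fun_cong[of _ _ A]) auto

end



context cliff
begin

lemma P_decomp:
  assumes "T \<in> Pset n eta"
  obtains W S where "T = W \<odot> S" "W \<in> center n" "cl_invertible n eta W"
    "S \<in> even_part n \<or> S \<in> odd_part n" "cl_invertible n eta S"
  using assms unfolding Pset_def units_in_def by blast

lemma P_inv: "T \<in> Pset n eta \<Longrightarrow> cl_invertible n eta T"
  by (erule P_decomp) (simp add: invertible_mult(1))

lemma rev_grades: "X \<in> grades n K \<Longrightarrow> cl_rev X \<in> grades n K"
  unfolding grades_def cl_rev_def clif_def by auto

lemma rev_center: "W \<in> center n \<Longrightarrow> cl_rev W \<in> center n"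
  unfolding center_def using rev_grades by auto

lemma grades0_center: "grades n {0} \<subseteq> (center n :: 'a mv set)"
  unfolding center_def using grades0_sub by auto

lemma center_mult:
  assumes n: "0 < n" and W1: "W1 \<in> center n" and W2: "W2 \<in> center n"
  shows "W1 \<odot> W2 \<in> center n"
proof (cases "odd n")
  case True
  then have g: "W1 \<in> grades n {0, n}" "W2 \<in> grades n {0, n}" using W1 W2 center_odd' by auto
  have "W1 \<odot> W2 = cen (W1 {}) (W1 {..<n}) \<odot> cen (W2 {}) (W2 {..<n})"
    using grades0n_cen[OF n g(1)] grades0n_cen[OF n g(2)] by simp
  then show ?thesis using cen_mult cen_grades0n True center_odd' by simp
next
  case False
  then have g: "W1 \<in> grades n {0}" "W2 \<in> grades n {0}" using W1 W2 center_even' by auto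
  have "W1 \<odot> W2 = cen (W1 {}) 0 \<odot> cen (W2 {}) 0"
    using grades0_cen[OF n g(1)] grades0_cen[OF n g(2)] by simp
  then show ?thesis using cen_mult cen_grades0 False center_even' by simp
qed

lemma mult_grades0_0n:
  assumes n: "0 < n" and W: "W \<in> grades n {0}" and X: "X \<in> grades n {0, n}"
  shows "W \<odot> X \<in> grades n {0, n}"
proof -
  have "W \<odot> X = cen (W {}) 0 \<odot> cen (X {}) (X {..<n})"
    using grades0_cen[OF n W] grades0n_cen[OF n X] by simp
  then show ?thesis using cen_mult cen_grades0n by simp
qed

lemma revT_T_decomp:
  assumes n: "0 < n" and T: "T = W \<odot> S" and W: "W \<in> center n"
  shows "cl_rev T \<odot> T = (cl_rev W \<odot> W) \<odot> (cl_rev S \<odot> S)"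
proof -
  let ?C = "cl_rev W \<odot> W"
  have cC: "?C \<in> center n" by (rule center_mult[OF n rev_center[OF W] W])
  have "cl_rev T \<odot> T = cl_rev S \<odot> (?C \<odot> S)" unfolding T by (simp add: rev_mult mult_assoc')
  also have "\<dots> = (cl_rev S \<odot> ?C) \<odot> S" by (simp only: mult_assoc')
  also have "\<dots> = (?C \<odot> cl_rev S) \<odot> S" using center_commute[OF cC] by simp
  also have "\<dots> = ?C \<odot> (cl_rev S \<odot> S)" by (simp only: mult_assoc')
  finally show ?thesis .
qed

lemma rev_minus: "cl_rev (- U) = - cl_rev U" unfolding cl_rev_def by (rule ext) simp

lemma RS_hat:
  assumes "S \<in> even_part n \<or> S \<in> odd_part n"
  shows "hat (cl_rev S \<odot> S) = cl_rev S \<odot> S"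
  using assms
proof
  assume e: "S \<in> even_part n"
  show ?thesis unfolding hat_mult hat_rev even_hat[OF e] ..
next
  assume o: "S \<in> odd_part n"
  show ?thesis unfolding hat_mult hat_rev odd_hat[OF o] rev_minus mult_minus_left mult_minus_right by simp
qed

lemma RS_rev: "cl_rev (cl_rev S \<odot> S) = cl_rev S \<odot> S"
  unfolding rev_mult rev_rev ..

lemma Y_hat_P:
  assumes T: "T \<in> Pset n eta" and X: "X \<in> clif n" and hX: "hat X = sc s X"
  shows "hat (T \<odot> X \<odot> cl_inv n eta T) = sc s (T \<odot> X \<odot> cl_inv n eta T)"
proof -
  obtain W S where d: "T = W \<odot> S" "W \<in> center n" "cl_invertible n eta W"
    "S \<in> even_part n \<or> S \<in> odd_part n" "cl_invertible n eta S"
    using T by (rule P_decomp)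
  have Y: "T \<odot> X \<odot> cl_inv n eta T = S \<odot> X \<odot> cl_inv n eta S"
    unfolding d(1) by (rule conj_central[OF d(3,2,5) X])
  show ?thesis unfolding Y hat_conj[OF d(5,4)] hX by (simp add: mult_sc_left mult_sc_right)
qed

lemma Y_scalar0:
  assumes inv: "cl_invertible n eta T" and X: "X \<in> clif n"
  shows "(T \<odot> X \<odot> cl_inv n eta T) {} = X {}"
proof -
  have "cl_one \<odot> cl_inv n eta T = cl_inv n eta T \<odot> cl_one"
    using inv_spec(1)[OF inv] by (simp add: mult_one_left mult_one_right)
  then have "((T \<odot> X \<odot> cl_inv n eta T) \<odot> cl_one) {} = (X \<odot> cl_one) {}"
    by (rule conj_scalar[OF inv X one_clif])
  then show ?thesis using X by (simp add: mult_one_right mult_clif)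
qed

lemma II_cen: "II = cen 0 1" unfolding cen_def by (rule ext) (simp add: sc_def)

lemma Y_scalarI:
  assumes n: "odd n" and inv: "cl_invertible n eta T" and X: "X \<in> clif n"
  shows "(T \<odot> X \<odot> cl_inv n eta T) {..<n} = X {..<n}"
proof -
  have "II \<in> center n" unfolding II_cen using cen_grades0n center_odd'[OF n] by simp
  then have "II \<odot> cl_inv n eta T = cl_inv n eta T \<odot> II" by (rule center_commute)
  then have "((T \<odot> X \<odot> cl_inv n eta T) \<odot> II) {} = (X \<odot> II) {}"
    by (rule conj_scalar[OF inv X II_clif])
  then have "sg * (T \<odot> X \<odot> cl_inv n eta T) {..<n} = sg * X {..<n}" by (simp add: scalar_II)
  then show ?thesis using sg_nz by simp
qed

lemma GammaI:
  assumes "cl_invertible n eta T" "\<And>X. X \<in> grade n k \<Longrightarrow> T \<odot> X \<odot> cl_inv n eta T \<in> grade n k"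
  shows "T \<in> Gamma n eta k"
  unfolding Gamma_def using assms by blast

lemma gradeI:
  assumes "(Y::'a mv) \<in> clif n" "\<And>A. A \<subseteq> {..<n} \<Longrightarrow> card A \<noteq> k \<Longrightarrow> Y A = 0"
  shows "Y \<in> grade n k"
  unfolding grade_mem
proof (intro conjI allI impI)
  show "Y \<in> clif n" by fact
  fix A :: "nat set" assume "card A \<noteq> k"
  then show "Y A = 0" using assms clif_out[OF assms(1)] by (cases "A \<subseteq> {..<n}") auto
qed

lemma grade_even: "even k \<Longrightarrow> X \<in> grade n k \<Longrightarrow> X \<in> even_part n"
  unfolding grade_mem even_part_def grades_def by auto

lemma card_le_n: "A \<subseteq> {..<n} \<Longrightarrow> card A \<le> n"
  using card_mono[of "{..<n}" A] by simp

lemma card0_empty: "A \<subseteq> {..<n} \<Longrightarrow> card A = 0 \<Longrightarrow> A = {}"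
  using finite_subset[of A "{..<n}"] by simp

lemma grades_memI:
  assumes "(Y::'a mv) \<in> clif n" "\<And>A. A \<subseteq> {..<n} \<Longrightarrow> card A \<notin> K \<Longrightarrow> Y A = 0"
  shows "Y \<in> grades n K"
  unfolding grades_def
proof (intro CollectI conjI allI impI)
  show "Y \<in> clif n" by fact
  fix A :: "nat set" assume "card A \<notin> K"
  then show "Y A = 0" using assms clif_out[OF assms(1)] by (cases "A \<subseteq> {..<n}") auto
qed

lemma sg_pm: "sg = 1 \<or> sg = -1"
proof -
  have "(sg - 1) * (sg + 1) = 0" using sg_sq by (simp add: algebra_simps)
  then show ?thesis by (auto simp: eq_neg_iff_add_eq_0)
qed

end



context cliff
begin

lemma rs_vals: "rs 0 = (1::'a)" "rs 1 = (1::'a)" "rs 2 = (-1::'a)" "rs 3 = (-1::'a)"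
  "rs 4 = (1::'a)" "rs 5 = (1::'a)"
  unfolding rs_def by simp_all

lemma Q_sub_Gamma:
  assumes T: "T \<in> Qset n eta" and k0: "k \<noteq> 0" and kn: "k \<noteq> n"
    and cond: "\<And>A. A \<subseteq> {..<n} \<Longrightarrow> card A \<noteq> k \<Longrightarrow>
        rs (card A) \<noteq> (rs k :: 'a) \<or> (-1::'a) ^ card A \<noteq> (-1) ^ k \<or> card A = 0 \<or> (odd n \<and> card A = n)"
  shows "T \<in> Gamma n eta k"
proof -
  have P: "T \<in> Pset n eta" and N: "cl_rev T \<odot> T \<in> center n"
    using T unfolding Qset_def units_in_def by auto
  have inv: "cl_invertible n eta T" by (rule P_inv[OF P])
  show ?thesis
  proof (rule GammaI[OF inv])
    fix X :: "'a mv" assume X: "X \<in> grade n k"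
    have Xc: "X \<in> clif n" using X by (rule grade_clif)
    let ?Y = "T \<odot> X \<odot> cl_inv n eta T"
    have rY: "cl_rev ?Y = sc (rs k) ?Y"
      by (rule conj_rev[OF inv Xc center_commute[OF N] rev_grade[OF X]])
    have hY: "hat ?Y = sc ((-1) ^ k) ?Y" by (rule Y_hat_P[OF P Xc hat_grade[OF X]])
    show "?Y \<in> grade n k"
    proof (rule gradeI[OF mult_clif])
      fix A assume A: "A \<subseteq> {..<n}" and cA: "card A \<noteq> k"
      from cond[OF A cA] show "?Y A = 0"
      proof (elim disjE conjE)
        assume "rs (card A) \<noteq> (rs k :: 'a)" then show ?thesis using rev_zero[OF rY] by blast
      next
        assume "(-1::'a) ^ card A \<noteq> (-1) ^ k" then show ?thesis using hat_zero[OF hY] by blast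
      next
        assume "card A = 0" then have "A = {}" using card0_empty A by simp
        then show ?thesis using Y_scalar0[OF inv Xc] X k0 unfolding grade_mem by simp
      next
        assume o: "odd n" and "card A = n" then have "A = {..<n}" using A card_eq_n_full by simp
        then show ?thesis using Y_scalarI[OF o inv Xc] X kn unfolding grade_mem by simp
      qed
    qed
  qed
qed

lemma A_sub_Gamma:
  assumes inv: "cl_invertible n eta T" and N: "cl_rev T \<odot> T \<in> center n" and k0: "k \<noteq> 0" and kn: "k \<noteq> n"
    and cond: "\<And>A. A \<subseteq> {..<n} \<Longrightarrow> card A \<noteq> k \<Longrightarrow>
        rs (card A) \<noteq> (rs k :: 'a) \<or> card A = 0 \<or> (odd n \<and> card A = n)"
  shows "T \<in> Gamma n eta k"
proof (rule GammaI[OF inv])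
  fix X :: "'a mv" assume X: "X \<in> grade n k"
  have Xc: "X \<in> clif n" using X by (rule grade_clif)
  let ?Y = "T \<odot> X \<odot> cl_inv n eta T"
  have rY: "cl_rev ?Y = sc (rs k) ?Y"
    by (rule conj_rev[OF inv Xc center_commute[OF N] rev_grade[OF X]])
  show "?Y \<in> grade n k"
  proof (rule gradeI[OF mult_clif])
    fix A assume A: "A \<subseteq> {..<n}" and cA: "card A \<noteq> k"
    from cond[OF A cA] show "?Y A = 0"
    proof (elim disjE conjE)
      assume "rs (card A) \<noteq> (rs k :: 'a)" then show ?thesis using rev_zero[OF rY] by blast
    next
      assume "card A = 0" then have "A = {}" using card0_empty A by simp
      then show ?thesis using Y_scalar0[OF inv Xc] X k0 unfolding grade_mem by simp
    next
      assume o: "odd n" and "card A = n" then have "A = {..<n}" using A card_eq_n_full by simp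
      then show ?thesis using Y_scalarI[OF o inv Xc] X kn unfolding grade_mem by simp
    qed
  qed
qed

lemma card_cases3: "A \<subseteq> {..<n} \<Longrightarrow> n = 3 \<Longrightarrow> card A = 0 \<or> card A = 1 \<or> card A = 2 \<or> card A = 3"
  using card_le_n[of A] by auto
lemma card_cases4: "A \<subseteq> {..<n} \<Longrightarrow> n = 4 \<Longrightarrow> card A = 0 \<or> card A = 1 \<or> card A = 2 \<or> card A = 3 \<or> card A = 4"
  using card_le_n[of A] by auto
lemma card_cases5: "A \<subseteq> {..<n} \<Longrightarrow> n = 5 \<Longrightarrow> card A = 0 \<or> card A = 1 \<or> card A = 2 \<or> card A = 3 \<or> card A = 4 \<or> card A = 5"
  using card_le_n[of A] by auto

lemma neg1_ne: "(-1::'a) \<noteq> 1" by simp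

lemma RS_grades0_3:
  assumes n: "n = 3" and S: "S \<in> even_part n \<or> S \<in> odd_part n"
  shows "cl_rev S \<odot> S \<in> grades n {0}"
proof (rule grades_memI[OF mult_clif])
  let ?R = "cl_rev S \<odot> S"
  have h: "hat ?R = sc 1 ?R" using RS_hat[OF S] by simp
  have r: "cl_rev ?R = sc 1 ?R" using RS_rev[of S] by simp
  fix A assume A: "A \<subseteq> {..<n}" and c: "card A \<notin> {0}"
  have "card A = 1 \<or> card A = 2 \<or> card A = 3" using card_cases3[OF A n] c by auto
  then show "?R A = 0"
  proof (elim disjE)
    assume "card A = 2" then show ?thesis using rev_zero[OF r] rs_vals by simp
  qed (use hat_zero[OF h] in simp)+
qed

lemma claims3:
  assumes n: "n = 3"
  shows "Gamma n eta 1 = Gamma n eta 2 \<and> Gamma n eta 2 = Qset n eta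
         \<and> Qset n eta = Pset n eta \<and> Pset n eta = Aset n eta"
proof -
  have n0: "0 < n" using n by simp
  have on: "odd n" using n by simp
  have G1Q: "Gamma n eta 1 \<subseteq> Qset n eta" using gamma_Q[of _ 1] on n by auto
  have G2Q: "Gamma n eta 2 \<subseteq> Qset n eta" using gamma_Q[of _ 2] on n by auto
  have QP: "Qset n eta \<subseteq> Pset n eta" unfolding Qset_def by auto
  have PA: "Pset n eta \<subseteq> Aset n eta"
  proof
    fix T assume T: "T \<in> Pset n eta"
    obtain W S where d: "T = W \<odot> S" "W \<in> center n" "cl_invertible n eta W"
      "S \<in> even_part n \<or> S \<in> odd_part n" "cl_invertible n eta S"
      using T by (rule P_decomp)
    have inv: "cl_invertible n eta T" by (rule P_inv[OF T])
    have "cl_rev T \<odot> T = (cl_rev W \<odot> W) \<odot> (cl_rev S \<odot> S)" by (rule revT_T_decomp[OF n0 d(1,2)])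
    moreover have "cl_rev W \<odot> W \<in> center n" by (rule center_mult[OF n0 rev_center[OF d(2)] d(2)])
    moreover have "cl_rev S \<odot> S \<in> center n" using RS_grades0_3[OF n d(4)] grades0_center by auto
    ultimately have "cl_rev T \<odot> T \<in> center n" using center_mult[OF n0] by simp
    moreover have "cl_invertible n eta (cl_rev T \<odot> T)"
      by (rule invertible_mult(1)[OF rev_invertible(1)[OF inv] inv])
    ultimately show "T \<in> Aset n eta" unfolding Aset_def units_in_def using inv by simp
  qed
  have AG1: "Aset n eta \<subseteq> Gamma n eta 1"
  proof
    fix T assume "T \<in> Aset n eta"
    then have inv: "cl_invertible n eta T" and N: "cl_rev T \<odot> T \<in> center n"
      unfolding Aset_def units_in_def by auto
    show "T \<in> Gamma n eta 1"
    proof (rule A_sub_Gamma[OF inv N])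
      fix A assume A: "A \<subseteq> {..<n}" and c: "card A \<noteq> 1"
      show "rs (card A) \<noteq> (rs 1 :: 'a) \<or> card A = 0 \<or> (odd n \<and> card A = n)"
        using card_cases3[OF A n] c rs_vals by auto
    qed (use n in auto)
  qed
  have AG2: "Aset n eta \<subseteq> Gamma n eta 2"
  proof
    fix T assume "T \<in> Aset n eta"
    then have inv: "cl_invertible n eta T" and N: "cl_rev T \<odot> T \<in> center n"
      unfolding Aset_def units_in_def by auto
    show "T \<in> Gamma n eta 2"
    proof (rule A_sub_Gamma[OF inv N])
      fix A assume A: "A \<subseteq> {..<n}" and c: "card A \<noteq> 2"
      show "rs (card A) \<noteq> (rs 2 :: 'a) \<or> card A = 0 \<or> (odd n \<and> card A = n)"
        using card_cases3[OF A n] c rs_vals on n by auto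
    qed (use n in auto)
  qed
  show ?thesis using G1Q G2Q QP PA AG1 AG2 by blast
qed


lemma RS_grades04:
  assumes n: "n = 4" and S: "S \<in> even_part n \<or> S \<in> odd_part n"
  shows "cl_rev S \<odot> S \<in> grades n {0, n}"
proof (rule grades_memI[OF mult_clif])
  let ?R = "cl_rev S \<odot> S"
  have h: "hat ?R = sc 1 ?R" using RS_hat[OF S] by simp
  have r: "cl_rev ?R = sc 1 ?R" using RS_rev[of S] by simp
  fix A assume A: "A \<subseteq> {..<n}" and c: "card A \<notin> {0, n}"
  have "card A = 1 \<or> card A = 2 \<or> card A = 3" using card_cases4[OF A n] c n by auto
  then show "?R A = 0"
  proof (elim disjE)
    assume "card A = 2" then show ?thesis using rev_zero[OF r] rs_vals by simp
  qed (use hat_zero[OF h] in simp)+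
qed

lemma P_N_04:
  assumes n: "n = 4" and T: "T \<in> Pset n eta"
  shows "cl_rev T \<odot> T \<in> grades n {0, n}"
proof -
  have n0: "0 < n" using n by simp
  obtain W S where d: "T = W \<odot> S" "W \<in> center n" "cl_invertible n eta W"
    "S \<in> even_part n \<or> S \<in> odd_part n" "cl_invertible n eta S"
    using T by (rule P_decomp)
  have "cl_rev T \<odot> T = (cl_rev W \<odot> W) \<odot> (cl_rev S \<odot> S)" by (rule revT_T_decomp[OF n0 d(1,2)])
  moreover have "cl_rev W \<odot> W \<in> grades n {0}"
    using center_mult[OF n0 rev_center[OF d(2)] d(2)] center_even' n by simp
  ultimately show ?thesis using mult_grades0_0n[OF n0] RS_grades04[OF n d(4)] by simp
qed

lemma claims4:
  assumes n: "n = 4"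
  shows "Gamma n eta 1 = Gamma n eta 3 \<and> Gamma n eta 3 = Qset n eta
         \<and> Gamma n eta 2 = Qset' n eta \<and> Qset' n eta = Pset n eta
         \<and> Qset n eta \<noteq> Pset n eta"
proof -
  have n0: "0 < n" using n by simp
  have en: "even n" using n by simp
  have G1Q: "Gamma n eta 1 \<subseteq> Qset n eta" using gamma_Q[of _ 1] n by auto
  have G3Q: "Gamma n eta 3 \<subseteq> Qset n eta" using gamma_Q[of _ 3] n by auto
  have QG1: "Qset n eta \<subseteq> Gamma n eta 1"
  proof
    fix T assume T: "T \<in> Qset n eta"
    show "T \<in> Gamma n eta 1"
    proof (rule Q_sub_Gamma[OF T])
      fix A assume A: "A \<subseteq> {..<n}" and c: "card A \<noteq> 1"
      show "rs (card A) \<noteq> (rs 1 :: 'a) \<or> (-1::'a) ^ card A \<noteq> (-1) ^ 1 \<or> card A = 0 \<or> (odd n \<and> card A = n)"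
        using card_cases4[OF A n] c rs_vals by auto
    qed (use n in auto)
  qed
  have QG3: "Qset n eta \<subseteq> Gamma n eta 3"
  proof
    fix T assume T: "T \<in> Qset n eta"
    show "T \<in> Gamma n eta 3"
    proof (rule Q_sub_Gamma[OF T])
      fix A assume A: "A \<subseteq> {..<n}" and c: "card A \<noteq> 3"
      show "rs (card A) \<noteq> (rs 3 :: 'a) \<or> (-1::'a) ^ card A \<noteq> (-1) ^ 3 \<or> card A = 0 \<or> (odd n \<and> card A = n)"
        using card_cases4[OF A n] c rs_vals by auto
    qed (use n in auto)
  qed
  have G2P: "Gamma n eta 2 \<subseteq> Pset n eta" using gamma_P[of _ 2] n by auto
  have PQ': "Pset n eta \<subseteq> Qset' n eta"
  proof
    fix T assume T: "T \<in> Pset n eta"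
    have inv: "cl_invertible n eta T" by (rule P_inv[OF T])
    have "cl_invertible n eta (cl_rev T \<odot> T)"
      by (rule invertible_mult(1)[OF rev_invertible(1)[OF inv] inv])
    then show "T \<in> Qset' n eta" unfolding Qset'_def units_in_def using T P_N_04[OF n T] by simp
  qed
  have Q'P: "Qset' n eta \<subseteq> Pset n eta" unfolding Qset'_def by auto
  have PG2: "Pset n eta \<subseteq> Gamma n eta 2"
  proof
    fix T assume P: "T \<in> Pset n eta"
    have inv: "cl_invertible n eta T" by (rule P_inv[OF P])
    have N: "cl_rev T \<odot> T \<in> grades n {0, n}" by (rule P_N_04[OF n P])
    show "T \<in> Gamma n eta 2"
    proof (rule GammaI[OF inv])
      fix X :: "'a mv" assume X: "X \<in> grade n 2"
      have Xc: "X \<in> clif n" using X by (rule grade_clif)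
      let ?Y = "T \<odot> X \<odot> cl_inv n eta T"
      have NX: "(cl_rev T \<odot> T) \<odot> X = X \<odot> (cl_rev T \<odot> T)"
        by (rule grades0n_commute_even[OF en N grade_even[OF _ X]]) simp
      have rY: "cl_rev ?Y = sc (rs 2) ?Y" by (rule conj_rev[OF inv Xc NX rev_grade[OF X]])
      have hY: "hat ?Y = sc ((-1) ^ 2) ?Y" by (rule Y_hat_P[OF P Xc hat_grade[OF X]])
      show "?Y \<in> grade n 2"
      proof (rule gradeI[OF mult_clif])
        fix A assume A: "A \<subseteq> {..<n}" and cA: "card A \<noteq> 2"
        have "card A = 0 \<or> card A = 1 \<or> card A = 3 \<or> card A = 4" using card_cases4[OF A n] cA by auto
        then show "?Y A = 0"
        proof (elim disjE)
          assume "card A = 0" then show ?thesis using rev_zero[OF rY] rs_vals by simp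
        next
          assume "card A = 4" then show ?thesis using rev_zero[OF rY] rs_vals by simp
        qed (use hat_zero[OF hY] in simp)+
      qed
    qed
  qed
  have QneP: "Qset n eta \<noteq> Pset n eta"
  proof
    assume QP: "Qset n eta = Pset n eta"
    let ?T = "cen 1 2"
    have d: "1 * 1 - sg * 2 * 2 \<noteq> (0::'a)" using sg_pm by auto
    have inv: "cl_invertible n eta ?T" by (rule cen_inv(3)[OF d])
    have ev: "?T \<in> even_part n" unfolding even_part_def grades_def
    proof (intro CollectI conjI allI impI)
      show "?T \<in> clif n" by (rule cen_clif)
      fix A :: "nat set" assume "card A \<notin> {k. even k}"
      then have "odd (card A)" by simp
      then have "card A \<noteq> 0" "card A \<noteq> n" using en by (auto intro!: gr0I)
      then have "card A \<notin> {0, n}" by simp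
      then show "?T A = 0" using cen_grades0n[of 1 2] unfolding grades_def by blast
    qed
    have "?T \<in> Pset n eta" by (rule even_P[OF inv]) (use ev in simp)
    then have "?T \<in> Qset n eta" using QP by simp
    then have "cl_rev ?T \<odot> ?T \<in> center n" unfolding Qset_def units_in_def by simp
    then have g: "cl_rev ?T \<odot> ?T \<in> grades n {0}" using center_even'[OF en] by simp
    have "cl_rev ?T \<odot> ?T = cen (1 * 1 + sg * 2 * 2) (1 * 2 + 2 * 1)"
      unfolding rev_cen using n rs_vals cen_mult by simp
    then have "(cl_rev ?T \<odot> ?T) {..<n} = 4" using cen_full[OF n0] by simp
    moreover have "(cl_rev ?T \<odot> ?T) {..<n} = 0" using g n unfolding grades_def by auto
    ultimately show False by simp
  qed
  show ?thesis using G1Q G3Q QG1 QG3 G2P PQ' Q'P PG2 QneP by blast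
qed

lemma claims5:
  assumes n: "n = 5"
  shows "Gamma n eta 1 = Gamma n eta 2 \<and> Gamma n eta 2 = Gamma n eta 3
         \<and> Gamma n eta 3 = Gamma n eta 4 \<and> Gamma n eta 4 = Qset n eta"
proof -
  have on: "odd n" using n by simp
  have GQ: "Gamma n eta k \<subseteq> Qset n eta" if "1 \<le> k" "k < n" for k
    using gamma_Q[of _ k] that on by auto
  have QG: "Qset n eta \<subseteq> Gamma n eta k" if k: "k \<in> {1, 2, 3, 4}" for k
  proof
    fix T assume T: "T \<in> Qset n eta"
    show "T \<in> Gamma n eta k"
    proof (rule Q_sub_Gamma[OF T])
      fix A assume A: "A \<subseteq> {..<n}" and c: "card A \<noteq> k"
      show "rs (card A) \<noteq> (rs k :: 'a) \<or> (-1::'a) ^ card A \<noteq> (-1) ^ k \<or> card A = 0 \<or> (odd n \<and> card A = n)"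
        using card_cases5[OF A n] c rs_vals k on n by auto
    qed (use n k in auto)
  qed
  have "Gamma n eta 1 = Qset n eta" using GQ[of 1] QG[of 1] n by auto
  moreover have "Gamma n eta 2 = Qset n eta" using GQ[of 2] QG[of 2] n by auto
  moreover have "Gamma n eta 3 = Qset n eta" using GQ[of 3] QG[of 3] n by auto
  moreover have "Gamma n eta 4 = Qset n eta" using GQ[of 4] QG[of 4] n by auto
  ultimately show ?thesis by simp
qed

lemma all_claims: "low_dim_claims n eta"
  unfolding low_dim_claims_def using claims3 claims4 claims5 by blast

end


theorem mainTheorem16:
  shows "(\<forall>p q :: nat. low_dim_claims (p + q) (real_sig p))
       \<and> (\<forall>n :: nat. low_dim_claims n (\<lambda>_. 1 :: complex))"
proof -
  have r: "low_dim_claims (p + q) (real_sig p)" for p q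
  proof -
    interpret cliff "p + q" "real_sig p" by unfold_locales (simp add: real_sig_def)
    show ?thesis by (rule all_claims)
  qed
  have c: "low_dim_claims n (\<lambda>_. 1 :: complex)" for n
  proof -
    interpret cliff n "\<lambda>_. 1 :: complex" by unfold_locales simp
    show ?thesis by (rule all_claims)
  qed
  show ?thesis using r c by blast
qed

end
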